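(* Let $T$ be a lush hedge of height $2$ having two vertices of height $1$ with different numbers of children, and write $\ell_i=\ell_i(T)$. Then the unordered multiplicity list $\mathbf m=\{\ell_1+\ell_3,\ell_2,\ell_2,1,1\}$ is realizable in $\mathcal S(T)$, but no matrix in $\mathcal S(T)$ all of whose off-diagonal entries lie in $\{0,1\}$ has unordered multiplicity list $\mathbf m$.
   Context: Hedges: a rooted tree has a distinguished root; $y$ is a child of adjacent $z$ if the root-to-$y$ path passes through $z$; a leaf is a non-root vertex of degree 1. A hedge is a rooted tree in which all leaves are at equal distance from the root. Height of a vertex: distance to a nearest leaf; height of the hedge: that of the root. $V_i(T)$ is the set of vertices of height $i$; $\ell_i(T)=|V_{i-1}(T)|-|V_i(T)|$ for $i\ge1$ (so here $\ell_3=1$). A hedge is lush if every vertex of height $\ge2$ has at least three children and every vertex of height $1$ at least two. $\mathcal S(T)$ is the set of real symmetric matrices indexed by $V(T)$ with $a_{ij}\ne0$ iff $\{i,j\}\in E(T)$ for $i\ne j$, diagonal arbitrary. An unordered multiplicity list is realizable in $\mathcal S(T)$ if some $A\in\mathcal S(T)$ has distinct eigenvalues with exactly those multiplicities. *)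

theory Defs
  imports "HOL-Analysis.Analysis" "HOL-Computational_Algebra.Polynomial" "HOL-Library.Multiset"
begin

definition graph_edges :: "('n \<Rightarrow> 'n \<Rightarrow> bool) \<Rightarrow> 'n set set" where
  "graph_edges E = {{u, v} | u v. E u v}"

definition is_tree :: "('n::finite \<Rightarrow> 'n \<Rightarrow> bool) \<Rightarrow> bool" where
  "is_tree E \<longleftrightarrow> (\<forall>u v. E u v \<longrightarrow> E v u) \<and> (\<forall>u. \<not> E u u)
     \<and> (\<forall>u v. E\<^sup>*\<^sup>* u v) \<and> card (graph_edges E) = CARD('n) - 1"

definition tdist :: "('n \<Rightarrow> 'n \<Rightarrow> bool) \<Rightarrow> 'n \<Rightarrow> 'n \<Rightarrow> nat" where
  "tdist E u v = (LEAST k. (E ^^ k) u v)"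

definition degree :: "('n \<Rightarrow> 'n \<Rightarrow> bool) \<Rightarrow> 'n \<Rightarrow> nat" where
  "degree E v = card {w. E v w}"

definition leaves :: "('n \<Rightarrow> 'n \<Rightarrow> bool) \<Rightarrow> 'n \<Rightarrow> 'n set" where
  "leaves E r = {v. v \<noteq> r \<and> degree E v = 1}"

definition children :: "('n \<Rightarrow> 'n \<Rightarrow> bool) \<Rightarrow> 'n \<Rightarrow> 'n \<Rightarrow> 'n set" where
  "children E r z = {y. E z y \<and> tdist E r y = tdist E r z + 1}"

definition is_hedge :: "('n::finite \<Rightarrow> 'n \<Rightarrow> bool) \<Rightarrow> 'n \<Rightarrow> bool" where
  "is_hedge E r \<longleftrightarrow> is_tree E \<and>
     (\<forall>l1 \<in> leaves E r. \<forall>l2 \<in> leaves E r. tdist E r l1 = tdist E r l2)"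

definition vheight :: "('n \<Rightarrow> 'n \<Rightarrow> bool) \<Rightarrow> 'n \<Rightarrow> 'n \<Rightarrow> nat" where
  "vheight E r v = (LEAST k. \<exists>l \<in> leaves E r. tdist E v l = k)"

definition hedge_height :: "('n \<Rightarrow> 'n \<Rightarrow> bool) \<Rightarrow> 'n \<Rightarrow> nat" where
  "hedge_height E r = vheight E r r"

definition level_set :: "('n \<Rightarrow> 'n \<Rightarrow> bool) \<Rightarrow> 'n \<Rightarrow> nat \<Rightarrow> 'n set" where
  "level_set E r i = {v. vheight E r v = i}"

definition ell :: "('n \<Rightarrow> 'n \<Rightarrow> bool) \<Rightarrow> 'n \<Rightarrow> nat \<Rightarrow> int" where
  "ell E r i = int (card (level_set E r (i - 1))) - int (card (level_set E r i))"

definition lush :: "('n::finite \<Rightarrow> 'n \<Rightarrow> bool) \<Rightarrow> 'n \<Rightarrow> bool" where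
  "lush E r \<longleftrightarrow> is_hedge E r \<and>
     (\<forall>v. vheight E r v \<ge> 2 \<longrightarrow> card (children E r v) \<ge> 3) \<and>
     (\<forall>v. vheight E r v = 1 \<longrightarrow> card (children E r v) \<ge> 2)"

definition S_T :: "('n::finite \<Rightarrow> 'n \<Rightarrow> bool) \<Rightarrow> (real^'n^'n) set" where
  "S_T E = {A. transpose A = A \<and> (\<forall>i j. i \<noteq> j \<longrightarrow> (A $ i $ j \<noteq> 0 \<longleftrightarrow> E i j))}"

definition charpoly :: "real^'n^'n \<Rightarrow> real poly" where
  "charpoly A = det (\<chi> i j. (if i = j then [:- (A $ i $ j), 1:] else [:- (A $ i $ j):]))"

text \<open>Unordered multiplicity list: multiset of (algebraic) multiplicities of the distinct
  eigenvalues (all eigenvalues of a real symmetric matrix are real).\<close>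
definition mult_list :: "real^'n^'n \<Rightarrow> nat multiset" where
  "mult_list A = image_mset (\<lambda>x. order x (charpoly A)) (mset_set {x. poly (charpoly A) x = 0})"

end

theory Submission
  imports Defs
begin


lemma poly_charpoly: "poly (charpoly A) t = det (\<chi> i j. if i = j then t - A$i$j else - A$i$j)"
  unfolding charpoly_def det_def
  by (auto simp: poly_sum poly_prod intro!: sum.cong arg_cong2[where f="(*)"] prod.cong)

lemma perm_exists_up:
  fixes h :: "'n::finite \<Rightarrow> nat"
  assumes p: "p permutes (UNIV::'n set)" and nid: "p \<noteq> id"
  shows "\<exists>i. p i \<noteq> i \<and> h i \<le> h (p i)"
proof (rule ccontr)
  assume "\<not> ?thesis"
  hence lt: "\<And>i. p i \<noteq> i \<Longrightarrow> h (p i) < h i" by (meson not_le)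
  obtain i0 where i0: "p i0 \<noteq> i0" using nid by (metis eq_id_iff)
  have "(\<Sum>i\<in>UNIV. h (p i)) < (\<Sum>i\<in>UNIV. h i)"
    by (rule sum_strict_mono_ex1) (auto intro: lt i0 less_imp_le dest: lt simp: le_less, metis lt i0)
  moreover have "(\<Sum>i\<in>UNIV. h (p i)) = (\<Sum>i\<in>UNIV. h i)"
    using sum.permute[OF p, of h] by (simp add: comp_def)
  ultimately show False by simp
qed

lemma det_tri:
  fixes Y :: "real^'n::finite^'n" and h :: "'n \<Rightarrow> nat"
  assumes z: "\<And>i j. i \<noteq> j \<Longrightarrow> h i \<le> h j \<Longrightarrow> Y$i$j = 0"
  shows "det Y = (\<Prod>i\<in>UNIV. Y$i$i)"
proof -
  let ?U = "UNIV:: 'n set"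
  let ?PU = "{p. p permutes ?U}"
  let ?pp = "\<lambda>p. of_int (sign p) * prod (\<lambda>i. Y$i$p i) (UNIV :: 'n set)"
  have fU: "finite ?U" by simp
  have id0: "{id} \<subseteq> ?PU" by (auto simp: permutes_id)
  have p0: "\<forall>p \<in> ?PU - {id}. ?pp p = 0"
  proof
    fix p assume "p \<in> ?PU - {id}"
    then obtain i where "p i \<noteq> i \<and> h i \<le> h (p i)" using perm_exists_up[of p h] by auto
    hence "Y$i$p i = 0" using z by metis
    with prod_zero[OF fU] show "?pp p = 0" by force
  qed
  from sum.mono_neutral_cong_left[OF finite_permutations[OF fU] id0 p0] show ?thesis
    unfolding det_def by (simp add: sign_id)
qed

lemma order_local:
  fixes p :: "real poly"
  assumes ev: "eventually (\<lambda>t. poly p t = (t - c)^e * g t) (at c)"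
    and lim: "(g \<longlongrightarrow> L) (at c)" and L: "L \<noteq> 0"
  shows "order c p = e"
proof -
  have ne: "eventually (\<lambda>t. t \<noteq> c) (at c)" by (simp add: eventually_at_filter)
  have "p \<noteq> 0"
  proof
    assume p0: "p = 0"
    have "eventually (\<lambda>t. g t = 0) (at c)"
      using ev ne by eventually_elim (simp add: p0)
    hence "(g \<longlongrightarrow> 0) (at c)" by (rule tendsto_eventually)
    with lim L show False using tendsto_unique[OF at_neq_bot] by metis
  qed
  obtain q where pq: "p = [:-c,1:]^order c p * q" and nd: "\<not> [:-c,1:] dvd q"
    using order_decomp[OF \<open>p\<noteq>0\<close>] by blast
  have qc: "poly q c \<noteq> 0" using nd by (simp add: poly_eq_0_iff_dvd)
  have qlim: "((\<lambda>t. poly q t) \<longlongrightarrow> poly q c) (at c)"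
    by (simp add: isCont_def[symmetric])
  define ordc where "ordc = order c p"
  have ev2: "eventually (\<lambda>t. (t-c)^ordc * poly q t = (t-c)^e * g t \<and> t \<noteq> c) (at c)"
    using ev ne by eventually_elim (subst (asm) pq, simp add: ordc_def poly_power)
  show ?thesis
  proof (rule ccontr)
    assume "order c p \<noteq> e"
    hence "ordc < e \<or> e < ordc" unfolding ordc_def by arith
    thus False
    proof
      assume oe: "ordc < e"
      have "eventually (\<lambda>t. (t-c)^(e-ordc) * g t = poly q t) (at c)"
        using ev2 proof eventually_elim
        case (elim t)
        hence h1: "(t-c)^ordc * poly q t = (t-c)^ordc * ((t-c)^(e-ordc) * g t)" and tc: "t \<noteq> c"
          using oe by (auto simp: power_add[symmetric])
        from h1 tc show ?case by simp
      qed
      moreover have "((\<lambda>t. (t-c)^(e-ordc) * g t) \<longlongrightarrow> (c-c)^(e-ordc) * L) (at c)"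
        by (intro tendsto_intros lim)
      ultimately have "((\<lambda>t. poly q t) \<longlongrightarrow> 0) (at c)"
        using oe by (simp add: tendsto_cong zero_power)
      with qlim qc show False using tendsto_unique[OF at_neq_bot] by metis
    next
      assume oe: "e < ordc"
      have "eventually (\<lambda>t. (t-c)^(ordc-e) * poly q t = g t) (at c)"
        using ev2 proof eventually_elim
        case (elim t)
        have pw: "(t-c)^ordc = (t-c)^e * (t-c)^(ordc-e)"
          using oe by (simp add: power_add[symmetric])
        have h1: "(t-c)^e * ((t-c)^(ordc-e) * poly q t) = (t-c)^e * g t" and tc: "t \<noteq> c"
          using elim by (auto simp: pw mult.assoc)
        from h1 tc show ?case by simp
      qed
      moreover have "((\<lambda>t. (t-c)^(ordc-e) * poly q t) \<longlongrightarrow> (c-c)^(ordc-e) * poly q c) (at c)"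
        by (intro tendsto_intros qlim)
      ultimately have "(g \<longlongrightarrow> 0) (at c)"
        using oe by (simp add: tendsto_cong zero_power)
      with lim L show False using tendsto_unique[OF at_neq_bot] by metis
    qed
  qed
qed


locale lushH =
  fixes E :: "'n::finite \<Rightarrow> 'n \<Rightarrow> bool" and r :: 'n
  assumes lush: "lush E r" and hh: "hedge_height E r = 2"
begin

abbreviation "dep v \<equiv> tdist E r v"

lemma tree: "is_tree E" using lush unfolding lush_def is_hedge_def by auto
lemma symE: "E u v \<Longrightarrow> E v u" using tree unfolding is_tree_def by auto
lemma irrE: "\<not> E u u" using tree unfolding is_tree_def by auto
lemma conn: "E\<^sup>*\<^sup>* u v" using tree unfolding is_tree_def by auto
lemma card_edges: "card (graph_edges E) = CARD('n) - 1" using tree unfolding is_tree_def by auto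

lemma tdist_ex: "(E ^^ tdist E u v) u v"
proof -
  obtain n where "(E ^^ n) u v" using conn[of u v] by (metis rtranclp_imp_relpowp)
  thus ?thesis unfolding tdist_def by (rule LeastI)
qed

lemma tdist_le: "(E ^^ n) u v \<Longrightarrow> tdist E u v \<le> n"
  unfolding tdist_def by (rule Least_le)

lemma tdist_0: "tdist E u v = 0 \<longleftrightarrow> u = v"
proof
  assume "tdist E u v = 0" thus "u = v" using tdist_ex[of u v] by simp
next
  assume "u = v" thus "tdist E u v = 0" using tdist_le[of 0 u v] by simp
qed

lemma tdist_1: "E u v \<Longrightarrow> tdist E u v = 1"
proof -
  assume e: "E u v"
  have "tdist E u v \<le> 1" using e by (intro tdist_le) auto
  moreover have "u \<noteq> v" using e irrE by auto
  ultimately show ?thesis using tdist_0[of u v] by linarith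
qed

lemma dep_edge: "E u v \<Longrightarrow> dep v \<le> dep u + 1"
proof -
  assume e: "E u v"
  have "(E ^^ Suc (dep u)) r v" using tdist_ex[of r u] e by (rule relpowp_Suc_I)
  thus ?thesis using tdist_le by fastforce
qed

lemma parent_ex: "v \<noteq> r \<Longrightarrow> \<exists>u. E u v \<and> dep u + 1 = dep v"
proof -
  assume "v \<noteq> r"
  hence "dep v \<noteq> 0" using tdist_0 by auto
  then obtain n where n: "dep v = Suc n" by (cases "dep v") auto
  have "(E ^^ Suc n) r v" using tdist_ex[of r v] n by simp
  then obtain u where u: "(E ^^ n) r u" "E u v" by (rule relpowp_Suc_E)
  have "dep u \<le> n" using u(1) by (rule tdist_le)
  moreover have "dep v \<le> dep u + 1" using u(2) by (rule dep_edge)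
  ultimately show ?thesis using u n by (intro exI[of _ u]) auto
qed

definition par :: "'n \<Rightarrow> 'n" where "par v = (SOME u. E u v \<and> dep u + 1 = dep v)"

lemma par: "v \<noteq> r \<Longrightarrow> E (par v) v \<and> dep (par v) + 1 = dep v"
  unfolding par_def by (rule someI_ex) (rule parent_ex)

lemma edges_eq: "graph_edges E = (\<lambda>v. {v, par v}) ` (UNIV - {r})"
proof -
  let ?f = "\<lambda>v. {v, par v}"
  have sub: "?f ` (UNIV - {r}) \<subseteq> graph_edges E"
    proof
    fix x assume "x \<in> ?f ` (UNIV - {r})"
    then obtain v where v: "v \<noteq> r" "x = {v, par v}" by auto
    hence "x = {par v, v} \<and> E (par v) v" using par[OF v(1)] by auto
    thus "x \<in> graph_edges E" unfolding graph_edges_def by blast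
  qed
  have inj: "inj_on ?f (UNIV - {r})"
  proof (rule inj_onI)
    fix v w assume v: "v \<in> UNIV - {r}" and w: "w \<in> UNIV - {r}" and eq: "{v, par v} = {w, par w}"
    show "v = w"
    proof (rule ccontr)
      assume "v \<noteq> w"
      hence "v = par w" "w = par v" using eq by (auto simp: doubleton_eq_iff)
      thus False using par[of v] par[of w] v w by auto
    qed
  qed
  have fin: "finite (graph_edges E)"
    by (rule finite_subset[of _ "Pow UNIV"]) auto
  have "card (?f ` (UNIV - {r})) = CARD('n) - 1"
    using card_image[OF inj] by simp
  thus ?thesis using card_subset_eq[OF fin sub] card_edges by simp
qed

lemma edge_cases: "E u w \<Longrightarrow> (w \<noteq> r \<and> u = par w) \<or> (u \<noteq> r \<and> w = par u)"
proof -
  assume e: "E u w"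
  hence "{u, w} \<in> graph_edges E" unfolding graph_edges_def by auto
  then obtain v where "v \<noteq> r" "{u, w} = {v, par v}" using edges_eq by auto
  thus ?thesis using e irrE by (auto simp: doubleton_eq_iff)
qed

lemma edge_dep: "E u w \<Longrightarrow> dep w = dep u + 1 \<or> dep u = dep w + 1"
  using edge_cases par by metis

lemma par_unique: "E u v \<Longrightarrow> dep u + 1 = dep v \<Longrightarrow> u = par v"
  using edge_cases par by fastforce


lemma par_dep: "v \<noteq> r \<Longrightarrow> dep (par v) + 1 = dep v" using par by blast
lemma par_E: "v \<noteq> r \<Longrightarrow> E (par v) v" using par by blast
lemma dep0: "dep v = 0 \<longleftrightarrow> v = r" using tdist_0 by auto
lemma dep_r[simp]: "dep r = 0" using dep0 by auto

lemma children_eq: "children E r z = {y. y \<noteq> r \<and> par y = z}"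
proof -
  have "E z y \<and> dep y = dep z + 1 \<longleftrightarrow> y \<noteq> r \<and> par y = z" for y
  proof
    assume a: "E z y \<and> dep y = dep z + 1"
    hence "y \<noteq> r" using dep0[of y] by auto
    thus "y \<noteq> r \<and> par y = z" using a par_unique[of z y] by auto
  next
    assume "y \<noteq> r \<and> par y = z" thus "E z y \<and> dep y = dep z + 1" using par by auto
  qed
  thus ?thesis unfolding children_def by auto
qed

lemma vh_root: "vheight E r r = 2" using hh unfolding hedge_height_def .

lemma root_ch: "card {y. y \<noteq> r \<and> par y = r} \<ge> 3"
proof -
  have "\<forall>v. vheight E r v \<ge> 2 \<longrightarrow> card (children E r v) \<ge> 3" using lush unfolding lush_def by blast
  hence "card (children E r r) \<ge> 3" using vh_root by simp
  thus ?thesis using children_eq[of r] by simp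
qed

lemma nbr_set: "{w. E v w} = (if v = r then {} else {par v}) \<union> {w. w \<noteq> r \<and> par w = v}"
proof -
  have "E v w \<longleftrightarrow> (v \<noteq> r \<and> w = par v) \<or> (w \<noteq> r \<and> par w = v)" for w
  proof
    assume "E v w" thus "(v \<noteq> r \<and> w = par v) \<or> (w \<noteq> r \<and> par w = v)"
      using edge_cases[of v w] by auto
  next
    assume "(v \<noteq> r \<and> w = par v) \<or> (w \<noteq> r \<and> par w = v)"
    thus "E v w" using par_E[of v] par_E[of w] symE[of "par v" v] by auto
  qed
  thus ?thesis by auto
qed

lemma maxdep_leaf:
  assumes mx: "\<forall>w. dep w \<le> dep v" and vr: "v \<noteq> r"
  shows "v \<in> leaves E r"
proof -
  have e: "{w. w \<noteq> r \<and> par w = v} = {}"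
  proof (rule ccontr)
    assume "{w. w \<noteq> r \<and> par w = v} \<noteq> {}"
    then obtain w where "w \<noteq> r" "par w = v" by auto
    thus False using mx par_dep[of w] by (metis add_le_same_cancel1 not_one_le_zero)
  qed
  have "{w. E v w} = {par v}" by (simp only: nbr_set[of v] e if_not_P[OF vr] Un_empty_right)
  thus ?thesis unfolding leaves_def degree_def using vr by simp
qed

lemma leaf_dep2: "l \<in> leaves E r \<Longrightarrow> dep l = 2"
proof -
  assume l: "l \<in> leaves E r"
  define D where "D = Max (range dep)"
  have "D \<in> range dep" unfolding D_def by (rule Max_in) auto
  then obtain v where v: "dep v = D" by auto
  have mx: "\<forall>w. dep w \<le> dep v" using v unfolding D_def by auto
  obtain y where y: "y \<noteq> r" "par y = r" using root_ch
    by (metis (mono_tags, lifting) Collect_empty_eq card.empty not_numeral_le_zero)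
  have "dep y = 1" using par_dep[OF y(1)] y(2) dep0 by simp
  hence "v \<noteq> r" using mx dep0[of v] by (metis le_zero_eq one_neq_zero)
  hence vl: "v \<in> leaves E r" using maxdep_leaf mx by blast
  have "\<exists>k. \<exists>l\<in>leaves E r. tdist E r l = k" using vl by blast
  hence "\<exists>l\<in>leaves E r. tdist E r l = vheight E r r"
    unfolding vheight_def by (rule LeastI_ex)
  then obtain l0 where "l0 \<in> leaves E r" "dep l0 = 2" using vh_root by auto
  thus ?thesis using lush l unfolding lush_def is_hedge_def by metis
qed

lemma dep_le2: "dep v \<le> 2"
proof -
  define D where "D = Max (range dep)"
  have "D \<in> range dep" unfolding D_def by (rule Max_in) auto
  then obtain w where w: "dep w = D" by auto
  have mx: "\<forall>u. dep u \<le> dep w" using w unfolding D_def by auto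
  obtain y where y: "y \<noteq> r" "par y = r" using root_ch
    by (metis (mono_tags, lifting) Collect_empty_eq card.empty not_numeral_le_zero)
  have "dep y = 1" using par_dep[OF y(1)] y(2) dep0 by simp
  hence "w \<noteq> r" using mx dep0[of w] by (metis le_zero_eq one_neq_zero)
  hence "w \<in> leaves E r" using maxdep_leaf mx by blast
  thus ?thesis using leaf_dep2 mx by metis
qed

lemma leaves_eq: "leaves E r = {v. dep v = 2}"
proof -
  have "dep v = 2 \<Longrightarrow> v \<in> leaves E r" for v
    using maxdep_leaf[of v] dep_le2 dep0[of v] by force
  thus ?thesis using leaf_dep2 by auto
qed

lemma vh_leaf: "dep v = 2 \<Longrightarrow> vheight E r v = 0"
  unfolding vheight_def using leaves_eq tdist_0
  by (intro Least_eq_0) auto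

lemma vh_1: assumes dv: "dep v = 1" shows "vheight E r v = 1"
proof -
  have vr: "v \<noteq> r" using dv dep0 by auto
  have nl: "v \<notin> leaves E r" using dv leaves_eq by auto
  hence "card {w. E v w} \<noteq> 1" using vr unfolding leaves_def degree_def by auto
  have "{w. w \<noteq> r \<and> par w = v} \<noteq> {}"
  proof
    assume e: "{w. w \<noteq> r \<and> par w = v} = {}"
    have "{w. E v w} = {par v}" by (simp only: nbr_set[of v] e if_not_P[OF vr] Un_empty_right)
    thus False using \<open>card {w. E v w} \<noteq> 1\<close> by simp
  qed
  then obtain w where w: "w \<noteq> r" "par w = v" by auto
  have "dep w = 2" using par_dep[OF w(1)] w(2) dv by simp
  hence wl: "w \<in> leaves E r" using leaves_eq by auto
  have "tdist E v w = 1" using tdist_1 par_E[OF w(1)] w(2) by simp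
  show ?thesis unfolding vheight_def
  proof (rule Least_equality)
    show "\<exists>l\<in>leaves E r. tdist E v l = 1" using wl \<open>tdist E v w = 1\<close> by blast
  next
    fix k assume "\<exists>l\<in>leaves E r. tdist E v l = k"
    then obtain l where "l \<in> leaves E r" "tdist E v l = k" by blast
    thus "1 \<le> k" using nl tdist_0[of v l] by (cases k) auto
  qed
qed

lemma vh_eq: "vheight E r v = 2 - dep v"
proof -
  have "dep v = 0 \<or> dep v = 1 \<or> dep v = 2" using dep_le2[of v] by arith
  thus ?thesis using vh_root vh_1 vh_leaf dep0 by fastforce
qed

lemma dep_cases: "dep v = 0 \<or> dep v = 1 \<or> dep v = 2" using dep_le2[of v] by arith

lemma par_V: "dep l = 2 \<Longrightarrow> dep (par l) = 1"
  using par_dep[of l] dep0[of l] by auto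
lemma par_r: "dep v = 1 \<Longrightarrow> par v = r"
  using par_dep[of v] dep0[of v] dep0[of "par v"] by auto

lemma Eiff: "i \<noteq> j \<Longrightarrow> E i j \<longleftrightarrow> (i = r \<and> dep j = 1) \<or> (j = r \<and> dep i = 1)
   \<or> (dep i = 2 \<and> j = par i) \<or> (dep j = 2 \<and> i = par j)"
proof
  assume "E i j"
  hence "(j \<noteq> r \<and> i = par j) \<or> (i \<noteq> r \<and> j = par i)" by (rule edge_cases)
  thus "(i = r \<and> dep j = 1) \<or> (j = r \<and> dep i = 1) \<or> (dep i = 2 \<and> j = par i) \<or> (dep j = 2 \<and> i = par j)"
    using dep_cases[of i] dep_cases[of j] dep0[of i] dep0[of j] par_r[of i] par_r[of j] by auto
next
  assume "(i = r \<and> dep j = 1) \<or> (j = r \<and> dep i = 1) \<or> (dep i = 2 \<and> j = par i) \<or> (dep j = 2 \<and> i = par j)"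
  thus "E i j" using par_E[of i] par_E[of j] symE[of "par i" i] par_r[of i] par_r[of j] dep0[of i] dep0[of j]
    by (metis zero_neq_numeral zero_neq_one)
qed

lemma children_V: "dep v = 1 \<Longrightarrow> children E r v = {l. dep l = 2 \<and> par l = v}"
  unfolding children_eq using par_dep dep0 by force

lemma level_eq: "level_set E r i = {v. 2 - dep v = i}"
  unfolding level_set_def vh_eq ..

lemma lev0: "level_set E r 0 = {v. dep v = 2}"
proof -
  have "2 - dep v = 0 \<longleftrightarrow> dep v = 2" for v using dep_le2[of v] by arith
  thus ?thesis unfolding level_eq by simp
qed
lemma lev1: "level_set E r 1 = {v. dep v = 1}"
proof -
  have "2 - dep v = 1 \<longleftrightarrow> dep v = 1" for v using dep_le2[of v] by arith
  thus ?thesis unfolding level_eq by simp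
qed
lemma lev2: "level_set E r 2 = {r}" unfolding level_eq using dep_le2 dep0 by force
lemma lev3: "level_set E r 3 = {}" unfolding level_eq by force

lemma ell1: "ell E r 1 = int (card {v. dep v = 2}) - int (card {v. dep v = 1})"
  unfolding ell_def using lev0 lev1 by simp
lemma ell2: "ell E r 2 = int (card {v. dep v = 1}) - 1"
  unfolding ell_def using lev1 lev2 by simp
lemma ell3: "ell E r 3 = 1"
  unfolding ell_def by (simp add: lev2 lev3)

lemma cardV: "card {v. dep v = 1} \<ge> 3"
proof -
  have "{y. y \<noteq> r \<and> par y = r} = {v. dep v = 1}"
    using par_r par_dep dep0 dep_cases by fastforce
  thus ?thesis using root_ch by simp
qed

lemma cardch: "dep v = 1 \<Longrightarrow> card {l. dep l = 2 \<and> par l = v} \<ge> 2"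
proof -
  assume d: "dep v = 1"
  have "\<forall>v. vheight E r v = 1 \<longrightarrow> card (children E r v) \<ge> 2" using lush unfolding lush_def by blast
  hence "card (children E r v) \<ge> 2" using vh_1[OF d] by blast
  thus ?thesis using children_V[OF d] by simp
qed

end


lemma sum_row_aux:
  fixes m :: "'n::finite \<Rightarrow> real"
  assumes "i \<notin> S"
  shows "(\<Sum>k\<in>UNIV. (if i = k then 1 else if k \<in> S then g k else 0) * m k) = m i + (\<Sum>k\<in>S. g k * m k)"
proof -
  have "(\<Sum>k\<in>UNIV. (if i = k then 1 else if k \<in> S then g k else 0) * m k)
      = (\<Sum>k\<in>UNIV. (if i = k then m k else 0) + (if k \<in> S then g k * m k else 0))"
    using assms by (intro sum.cong) auto
  also have "\<dots> = m i + (\<Sum>k\<in>S. g k * m k)"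
    by (simp add: sum.distrib sum.If_cases)
  finally show ?thesis .
qed

locale tree2 =
  fixes E :: "'n::finite \<Rightarrow> 'n \<Rightarrow> bool" and r :: 'n and V :: "'n set" and par :: "'n \<Rightarrow> 'n"
  assumes rV: "r \<notin> V"
    and parL: "\<And>l. l \<notin> V \<Longrightarrow> l \<noteq> r \<Longrightarrow> par l \<in> V"
    and Eiff: "\<And>i j. i \<noteq> j \<Longrightarrow> E i j \<longleftrightarrow> (i = r \<and> j \<in> V) \<or> (j = r \<and> i \<in> V)
        \<or> (i \<notin> V \<and> i \<noteq> r \<and> j = par i) \<or> (j \<notin> V \<and> j \<noteq> r \<and> i = par j)"
begin

definition L where "L = {l. l \<notin> V \<and> l \<noteq> r}"
definition ch where "ch v = {l \<in> L. par l = v}"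

lemma parL': "l \<in> L \<Longrightarrow> par l \<in> V" using parL unfolding L_def by auto
lemma rL: "r \<notin> L" unfolding L_def by auto
lemma VL: "v \<in> V \<Longrightarrow> v \<notin> L" unfolding L_def by auto
lemma cases3: "x = r \<or> x \<in> V \<or> x \<in> L" unfolding L_def by auto
lemma ch_L: "ch v \<subseteq> L" unfolding ch_def by auto
lemma UNIV_split: "(UNIV::'n set) = insert r (V \<union> L)" using cases3 by auto

lemma nE_LL: "l \<in> L \<Longrightarrow> l' \<in> L \<Longrightarrow> l \<noteq> l' \<Longrightarrow> \<not> E l l'"
  using Eiff[of l l'] parL' VL by (auto simp: L_def)
lemma parLr: "l \<in> L \<Longrightarrow> par l \<noteq> r \<and> par l \<noteq> l"
  using parL' rV VL by metis
lemma nE_Lr: "l \<in> L \<Longrightarrow> \<not> E l r \<and> \<not> E r l"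
proof -
  assume l: "l \<in> L"
  have "l \<noteq> r" "l \<notin> V" "par l \<noteq> r" using l parLr[OF l] rL VL by auto
  thus ?thesis using Eiff[of l r] Eiff[of r l] rV by auto
qed
lemma nE_VV: "v \<in> V \<Longrightarrow> v' \<in> V \<Longrightarrow> v \<noteq> v' \<Longrightarrow> \<not> E v v'"
  using Eiff[of v v'] rV by auto
lemma nE_LV: "l \<in> L \<Longrightarrow> v \<in> V \<Longrightarrow> par l \<noteq> v \<Longrightarrow> \<not> E l v \<and> \<not> E v l"
  using Eiff[of l v] Eiff[of v l] rV VL by (auto simp: L_def)
lemma E_rV: "v \<in> V \<Longrightarrow> E r v \<and> E v r"
  using Eiff[of r v] Eiff[of v r] rV by auto
lemma E_Lpar: "l \<in> L \<Longrightarrow> E l (par l) \<and> E (par l) l"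
proof -
  assume l: "l \<in> L"
  have "l \<noteq> r" "l \<notin> V" "par l \<noteq> l" using l parLr[OF l] rL VL by auto
  thus ?thesis using Eiff[of l "par l"] Eiff[of "par l" l] by auto
qed

definition Dv :: "real^'n^'n \<Rightarrow> real \<Rightarrow> 'n \<Rightarrow> real" where
  "Dv A t v = t - A$v$v - (\<Sum>l\<in>ch v. (A$v$l)^2 / (t - A$l$l))"

lemma ST_sym: "A \<in> S_T E \<Longrightarrow> A$i$j = A$j$i"
  unfolding S_T_def by (metis (mono_tags, lifting) mem_Collect_eq transpose_def vec_lambda_beta)
lemma ST_zero: "A \<in> S_T E \<Longrightarrow> i \<noteq> j \<Longrightarrow> \<not> E i j \<Longrightarrow> A$i$j = 0"
  unfolding S_T_def by auto

lemma det_formula: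
  assumes A: "A \<in> S_T E" and tl: "\<And>l. l \<in> L \<Longrightarrow> t \<noteq> A$l$l"
    and dv: "\<And>v. v \<in> V \<Longrightarrow> Dv A t v \<noteq> 0"
  shows "poly (charpoly A) t = (\<Prod>l\<in>L. t - A$l$l) * (\<Prod>v\<in>V. Dv A t v)
           * (t - A$r$r - (\<Sum>v\<in>V. (A$r$v)^2 / Dv A t v))"
proof -
  define M :: "real^'n^'n" where "M = (\<chi> i j. if i = j then t - A$i$j else - A$i$j)"
  have Mij: "M$i$j = (if i = j then t - A$i$i else - A$i$j)" for i j
    unfolding M_def by simp
  have z: "i \<noteq> j \<Longrightarrow> \<not> E i j \<Longrightarrow> M$i$j = 0" for i j
    using ST_zero[OF A] Mij by simp
  have Msym: "M$i$j = M$j$i" for i j using ST_sym[OF A] Mij by simp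
  define S1 where "S1 i = (if i \<in> V then ch i else {})" for i
  define E1 :: "real^'n^'n" where
    "E1 = (\<chi> i k. if i = k then 1 else if k \<in> S1 i then - M$i$k / M$k$k else 0)"
  define M1 where "M1 = E1 ** M"
  have S1v: "v \<in> V \<Longrightarrow> S1 v = ch v" for v unfolding S1_def by simp
  have iS1: "i \<notin> S1 i" for i unfolding S1_def using ch_L VL by auto
  have M1: "M1$i$j = M$i$j + (\<Sum>k\<in>S1 i. (- M$i$k / M$k$k) * M$k$j)" for i j
    unfolding M1_def E1_def matrix_matrix_mult_def
    using sum_row_aux[OF iS1[of i], of "\<lambda>k. - M$i$k / M$k$k" "\<lambda>k. M$k$j"] by simp
  have M1_nV: "i \<notin> V \<Longrightarrow> M1$i$j = M$i$j" for i j using M1[of i j] unfolding S1_def by simp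
  have M1_vv: "v \<in> V \<Longrightarrow> M1$v$v = Dv A t v" for v
  proof -
    assume v: "v \<in> V"
    have "(\<Sum>k\<in>S1 v. (- M$v$k / M$k$k) * M$k$v) = - (\<Sum>l\<in>ch v. (A$v$l)^2 / (t - A$l$l))"
      unfolding S1_def using v
      by (simp add: sum_negf[symmetric] power2_eq_square, intro sum.cong refl)
         (use ch_L VL v in \<open>auto simp: Mij ST_sym[OF A]\<close>)
    thus ?thesis using M1[of v v] v unfolding Dv_def by (simp add: Mij)
  qed
  have M1_vL: "v \<in> V \<Longrightarrow> j \<in> L \<Longrightarrow> M1$v$j = 0" for v j
  proof -
    assume v: "v \<in> V" and j: "j \<in> L"
    have "(\<Sum>k\<in>S1 v. (- M$v$k / M$k$k) * M$k$j) = (\<Sum>k\<in>ch v. if k = j then - M$v$j else 0)"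
      unfolding S1v[OF v]
    proof (rule sum.cong[OF refl])
      fix k assume k: "k \<in> ch v"
      hence kL: "k \<in> L" using ch_L by auto
      show "- M$v$k / M$k$k * M$k$j = (if k = j then - M$v$j else 0)"
      proof (cases "k = j")
        case True thus ?thesis using tl[OF kL] by (simp add: Mij)
      next
        case False thus ?thesis using z[OF False nE_LL[OF kL j False]] by simp
      qed
    qed
    also have "\<dots> = (if j \<in> ch v then - M$v$j else 0)" by simp
    finally have s: "(\<Sum>k\<in>S1 v. (- M$v$k / M$k$k) * M$k$j) = (if j \<in> ch v then - M$v$j else 0)" .
    show ?thesis
    proof (cases "j \<in> ch v")
      case True thus ?thesis using M1[of v j] s by simp
    next
      case False
      hence "par j \<noteq> v" using j unfolding ch_def by auto
      hence "M$v$j = 0" using z nE_LV[OF j v] VL[OF v] j by metis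
      thus ?thesis using M1[of v j] s False by simp
    qed
  qed
  have M1_vV: "v \<in> V \<Longrightarrow> j \<in> V \<Longrightarrow> j \<noteq> v \<Longrightarrow> M1$v$j = 0" for v j
  proof -
    assume v: "v \<in> V" and j: "j \<in> V" and jv: "j \<noteq> v"
    have "(\<Sum>k\<in>S1 v. (- M$v$k / M$k$k) * M$k$j) = 0"
      unfolding S1v[OF v]
    proof (intro sum.neutral ballI)
      fix k assume k: "k \<in> ch v"
      hence kL: "k \<in> L" and "par k = v" using ch_L unfolding ch_def by auto
      hence "M$k$j = 0" using z nE_LV[OF kL j] jv VL[OF j] kL by metis
      thus "- M$v$k / M$k$k * M$k$j = 0" by simp
    qed
    moreover have "M$v$j = 0" using z[OF jv[symmetric] nE_VV[OF v j jv[symmetric]]] .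
    ultimately show ?thesis using M1[of v j] by simp
  qed
  have M1_vr: "v \<in> V \<Longrightarrow> M1$v$r = M$v$r" for v
  proof -
    assume v: "v \<in> V"
    have "(\<Sum>k\<in>S1 v. (- M$v$k / M$k$k) * M$k$r) = 0"
      unfolding S1v[OF v]
    proof (intro sum.neutral ballI)
      fix k assume k: "k \<in> ch v"
      hence kL: "k \<in> L" using ch_L by auto
      hence "M$k$r = 0" using z nE_Lr[OF kL] rL by metis
      thus "- M$v$k / M$k$k * M$k$r = 0" by simp
    qed
    thus ?thesis using M1[of v r] by simp
  qed
  define S2 where "S2 i = (if i = r then V else {})" for i
  define E2 :: "real^'n^'n" where
    "E2 = (\<chi> i k. if i = k then 1 else if k \<in> S2 i then - M1$i$k / M1$k$k else 0)"
  define M2 where "M2 = E2 ** M1"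
  have S2r: "S2 r = V" unfolding S2_def by simp
  have iS2: "i \<notin> S2 i" for i unfolding S2_def using rV by auto
  have M2: "M2$i$j = M1$i$j + (\<Sum>k\<in>S2 i. (- M1$i$k / M1$k$k) * M1$k$j)" for i j
    unfolding M2_def E2_def matrix_matrix_mult_def
    using sum_row_aux[OF iS2[of i], of "\<lambda>k. - M1$i$k / M1$k$k" "\<lambda>k. M1$k$j"] by simp
  have M2_nr: "i \<noteq> r \<Longrightarrow> M2$i$j = M1$i$j" for i j using M2[of i j] unfolding S2_def by simp
  have M2_rr: "M2$r$r = t - A$r$r - (\<Sum>v\<in>V. (A$r$v)^2 / Dv A t v)"
  proof -
    have "(\<Sum>k\<in>S2 r. (- M1$r$k / M1$k$k) * M1$k$r) = - (\<Sum>v\<in>V. (A$r$v)^2 / Dv A t v)"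
      unfolding S2_def
      by (simp add: sum_negf[symmetric] power2_eq_square, intro sum.cong refl)
         (use rV in \<open>auto simp: M1_nV M1_vv M1_vr Mij ST_sym[OF A]\<close>)
    thus ?thesis using M2[of r r] rV by (simp add: M1_nV Mij)
  qed
  have M2_rj: "j \<noteq> r \<Longrightarrow> M2$r$j = 0" for j
  proof -
    assume jr: "j \<noteq> r"
    show ?thesis
    proof (cases "j \<in> V")
      case True
      have "(\<Sum>k\<in>S2 r. (- M1$r$k / M1$k$k) * M1$k$j) = (\<Sum>k\<in>V. if k = j then - M1$r$j else 0)"
        unfolding S2r
      proof (rule sum.cong[OF refl])
        fix k assume k: "k \<in> V"
        show "- M1$r$k / M1$k$k * M1$k$j = (if k = j then - M1$r$j else 0)"
          using M1_vv[OF k] dv[OF k] M1_vV[OF k True] by (cases "k = j") auto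
      qed
      thus ?thesis using M2[of r j] True by simp
    next
      case False
      hence jL: "j \<in> L" using jr cases3 by auto
      have "(\<Sum>k\<in>S2 r. (- M1$r$k / M1$k$k) * M1$k$j) = 0"
        unfolding S2_def using M1_vL[OF _ jL] by simp
      moreover have "M1$r$j = 0" using M1_nV[OF rV] z[OF jr[symmetric]] nE_Lr[OF jL] by simp
      ultimately show ?thesis using M2[of r j] by simp
    qed
  qed
  define h where "h x = (if x = r then 0 else if x \<in> V then 1 else (2::nat))" for x
  have detM2: "det M2 = (\<Prod>i\<in>UNIV. M2$i$i)"
  proof (rule det_tri[where h = h])
    fix i j assume ij: "i \<noteq> j" and hij: "h i \<le> h j"
    show "M2$i$j = 0"
    proof (cases "i = r")
      case True thus ?thesis using M2_rj ij by simp
    next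
      case ir: False
      show ?thesis
      proof (cases "i \<in> V")
        case iV: True
        hence "j \<noteq> r" using hij ir unfolding h_def by auto
        hence "j \<in> V \<or> j \<in> L" using cases3 by auto
        thus ?thesis using M2_nr[OF ir] M1_vV[OF iV] M1_vL[OF iV] ij by auto
      next
        case iV: False
        hence iL: "i \<in> L" using ir cases3 by auto
        hence jL: "j \<in> L" using hij ij unfolding h_def using VL rL cases3[of j] by (auto split: if_splits)
        show ?thesis using M2_nr[OF ir] M1_nV[OF iV] z[OF ij nE_LL[OF iL jL ij]] by simp
      qed
    qed
  qed
  have detE1: "det E1 = 1"
  proof -
    have "det E1 = (\<Prod>i\<in>UNIV. E1$i$i)"
    proof (rule det_tri[where h = "\<lambda>x. 2 - h x"])
      fix i j assume ij: "i \<noteq> j" and hij: "2 - h i \<le> 2 - h j"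
      show "E1$i$j = 0" unfolding E1_def using ij hij ch_L VL rL unfolding S1_def h_def
        by (auto split: if_splits)
    qed
    thus ?thesis unfolding E1_def by simp
  qed
  have detE2: "det E2 = 1"
  proof -
    have "det E2 = (\<Prod>i\<in>UNIV. E2$i$i)"
    proof (rule det_tri[where h = "\<lambda>x. 2 - h x"])
      fix i j assume ij: "i \<noteq> j" and hij: "2 - h i \<le> 2 - h j"
      show "E2$i$j = 0" unfolding E2_def using ij hij rV unfolding S2_def h_def
        by (auto split: if_splits)
    qed
    thus ?thesis unfolding E2_def by simp
  qed
  have "det M2 = det M" unfolding M2_def M1_def det_mul detE1 detE2 by simp
  moreover have "poly (charpoly A) t = det M" unfolding poly_charpoly M_def ..
  moreover have "(\<Prod>i\<in>UNIV. M2$i$i) = M2$r$r * (\<Prod>v\<in>V. M2$v$v) * (\<Prod>l\<in>L. M2$l$l)"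
  proof -
    have d: "V \<inter> L = {}" using VL by auto
    have "(\<Prod>i\<in>UNIV. M2$i$i) = M2$r$r * (\<Prod>i\<in>V \<union> L. M2$i$i)"
      unfolding UNIV_split using rV rL by (subst prod.insert) auto
    also have "\<dots> = M2$r$r * ((\<Prod>v\<in>V. M2$v$v) * (\<Prod>l\<in>L. M2$l$l))"
      using d by (subst prod.union_disjoint) auto
    finally show ?thesis by (simp add: mult.assoc)
  qed
  moreover have "(\<Prod>v\<in>V. M2$v$v) = (\<Prod>v\<in>V. Dv A t v)"
    using rV by (intro prod.cong refl) (metis M2_nr M1_vv)
  moreover have "(\<Prod>l\<in>L. M2$l$l) = (\<Prod>l\<in>L. t - A$l$l)"
    using rL VL by (intro prod.cong refl) (metis M2_nr M1_nV Mij L_def mem_Collect_eq)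
  ultimately show ?thesis using detM2 M2_rr by (simp add: mult_ac)
qed

end


lemma poly_eq_large:
  fixes p q :: "real poly"
  assumes "\<And>t. t > T \<Longrightarrow> poly p t = poly q t"
  shows "p = q"
proof (rule ccontr)
  assume "p \<noteq> q"
  hence "p - q \<noteq> 0" by simp
  hence "finite {x. poly (p - q) x = 0}" by (rule poly_roots_finite)
  moreover have "{T<..} \<subseteq> {x. poly (p - q) x = 0}" using assms by auto
  ultimately show False using infinite_Ioi finite_subset by blast
qed

lemma order_lin_pow: "order a ([:-b, 1:]^n) = (if a = b then n else 0)"
proof (cases "a = b")
  case True thus ?thesis using order_power_n_n by simp
next
  case False
  hence "poly ([:-b, 1:]^n) a \<noteq> 0" by (simp add: poly_power)
  hence "order a ([:-b, 1:]^n) = 0" by (rule order_0I)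
  thus ?thesis using False by simp
qed

lemma lin_ne0: "[:-b, 1::real:]^n \<noteq> 0" by simp

definition lp :: "real \<Rightarrow> nat \<Rightarrow> real poly" where "lp b n = [:-b, 1:]^n"
lemma lp_ne0: "lp b n \<noteq> 0" unfolding lp_def by simp
lemma order_lp: "order a (lp b n) = (if a = b then n else 0)" unfolding lp_def by (rule order_lin_pow)
lemma poly_lp: "poly (lp b n) x = (x - b)^n" unfolding lp_def by (simp add: poly_power)

context tree2
begin

definition wt :: "'n \<Rightarrow> real" where "wt l = 1 / sqrt (card (ch (par l)))"

definition wt2 :: "'n \<Rightarrow> 'n \<Rightarrow> real" where
  "wt2 i j = (if i \<in> L then wt i else if j \<in> L then wt j else 1)"

definition A0 :: "real^'n^'n" where
  "A0 = (\<chi> i j. if i \<noteq> j \<and> E i j then wt2 i j else 0)"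

lemma ch_par: "l \<in> L \<Longrightarrow> l \<in> ch (par l)" unfolding ch_def by simp

lemma wt_pos: "l \<in> L \<Longrightarrow> wt l > 0"
proof -
  assume l: "l \<in> L"
  have "card (ch (par l)) > 0" using ch_par[OF l] by (metis card_gt_0_iff empty_iff finite)
  thus ?thesis unfolding wt_def by simp
qed

lemma wt2_pos: "wt2 i j > 0" unfolding wt2_def using wt_pos by auto

lemma E_sym: "i \<noteq> j \<Longrightarrow> E i j = E j i" using Eiff[of i j] Eiff[of j i] by auto

lemma wt2_sym: "i \<noteq> j \<Longrightarrow> E i j \<Longrightarrow> wt2 i j = wt2 j i"
  unfolding wt2_def using nE_LL by auto

lemma A0_ST: "A0 \<in> S_T E"
proof -
  have sy: "A0$j$i = A0$i$j" for i j
      unfolding A0_def using E_sym[of i j] wt2_sym[of i j] by (cases "i = j") auto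
  have "transpose A0 = A0" by (simp add: vec_eq_iff transpose_def sy)
  moreover have "A0$i$j \<noteq> 0 \<longleftrightarrow> E i j" if ij: "i \<noteq> j" for i j
    unfolding A0_def using ij wt2_pos[of i j] by auto
  ultimately show ?thesis unfolding S_T_def by auto
qed

lemma A0_diag: "A0$i$i = 0"
  unfolding A0_def by auto

lemma A0_rv: "v \<in> V \<Longrightarrow> A0$r$v = 1"
  unfolding A0_def wt2_def using E_rV rV rL VL by auto
lemma A0_vl: "v \<in> V \<Longrightarrow> l \<in> ch v \<Longrightarrow> (A0$v$l)^2 = 1 / card (ch v)"
proof -
  assume v: "v \<in> V" and l: "l \<in> ch v"
  hence lL: "l \<in> L" and pl: "par l = v" using ch_L unfolding ch_def by auto
  have "v \<noteq> r" "l \<notin> V" "l \<noteq> r" using v rV lL VL rL by auto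
  hence "A0$v$l = wt l" unfolding A0_def wt2_def using lL pl VL[OF v] E_Lpar[OF lL] by auto
  thus ?thesis unfolding wt_def using pl by (simp add: power_divide)
qed

lemma Dv_A0:
  assumes v: "v \<in> V" and t: "t > 0" and ne: "ch v \<noteq> {}"
  shows "Dv A0 t v = t - 1 / t"
proof -
  have c: "card (ch v) > 0" using ne by (simp add: card_gt_0_iff)
  have "(\<Sum>l\<in>ch v. (A0$v$l)^2 / (t - A0$l$l)) = (\<Sum>l\<in>ch v. 1 / card (ch v) / t)"
    using A0_vl[OF v] A0_diag by simp
  also have "\<dots> = 1 / t" using c ne by simp
  finally show ?thesis unfolding Dv_def A0_diag by simp
qed


lemma pos_charpoly:
  assumes ne: "\<And>v. v \<in> V \<Longrightarrow> ch v \<noteq> {}" and k1: "card V \<ge> 1" and LV: "card L \<ge> card V"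
  defines "e \<equiv> card L + 1 - card V" and "s \<equiv> sqrt (real (card V) + 1)"
  shows "charpoly A0 = lp 0 e * lp 1 (card V - 1) * lp (-1) (card V - 1) * lp s 1 * lp (-s) 1"
    (is "_ = ?P")
proof (rule poly_eq_large[where T = 1])
  fix t :: real assume t: "t > 1"
  define k where "k = card V"
  define n where "n = card L"
  obtain k' where k': "k = Suc k'" using k1 unfolding k_def by (cases "card V") auto
  have ne': "n = e + k'" using LV k' unfolding e_def k_def n_def by simp
  have Dv: "v \<in> V \<Longrightarrow> Dv A0 t v = t - 1 / t" for v using Dv_A0[of v t] ne t by simp
  have "1 / t < 1" using t by simp
  hence Dv0: "t - 1 / t \<noteq> 0" using t by linarith
  have "poly (charpoly A0) t = (\<Prod>l\<in>L. t - A0$l$l) * (\<Prod>v\<in>V. Dv A0 t v)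
           * (t - A0$r$r - (\<Sum>v\<in>V. (A0$r$v)^2 / Dv A0 t v))"
    by (rule det_formula[OF A0_ST]) (use t A0_diag Dv Dv0 in auto)
  also have "\<dots> = t^n * (t - 1/t)^k * (t - k / (t - 1/t))"
    unfolding A0_diag n_def k_def using Dv A0_rv by simp
  also have "\<dots> = t^e * (t^2 - 1)^k' * (t^2 - 1 - k)"
  proof -
    have tu: "t * (t - 1/t) = t^2 - 1" using t by (simp add: field_simps power2_eq_square)
    have "t^n * (t - 1/t)^k * (t - k / (t - 1/t)) = t^e * (t * (t - 1/t))^k' * (t * (t - 1/t) - k)"
      unfolding ne' k' power_add power_mult_distrib using Dv0 by (simp add: field_simps)
    thus ?thesis unfolding tu .
  qed
  also have "\<dots> = poly ?P t"
  proof -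
    have "s^2 = real k + 1" unfolding s_def k_def by simp
    hence "(t - s) * (t + s) = t^2 - 1 - k" by (simp add: power2_eq_square algebra_simps)
    moreover have "(t - 1)^k' * (t + 1)^k' = (t^2 - 1)^k'"
      by (simp add: power_mult_distrib[symmetric] power2_eq_square algebra_simps)
    moreover have "poly ?P t = t^e * ((t-1)^k' * (t+1)^k') * ((t-s)*(t+s))"
      using k' unfolding k_def by (simp add: poly_lp)
    ultimately show ?thesis by simp
  qed
  finally show "poly (charpoly A0) t = poly ?P t" .
qed


lemma pos_mult:
  assumes ne: "\<And>v. v \<in> V \<Longrightarrow> ch v \<noteq> {}" and k2: "card V \<ge> 2" and LV: "card L \<ge> card V"
  shows "mult_list A0 = {# card L + 1 - card V, card V - 1, card V - 1, 1, 1 #}"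
proof -
  define e where "e = card L + 1 - card V"
  define s where "s = sqrt (real (card V) + 1)"
  define k where "k = card V"
  let ?P = "lp 0 e * lp 1 (k - 1) * lp (-1) (k - 1) * lp s 1 * lp (-s) 1"
  have cp: "charpoly A0 = ?P" unfolding e_def s_def k_def using pos_charpoly[OF ne] k2 LV by simp
  have s1: "s > 1" unfolding s_def using k2 by simp
  have e1: "e \<ge> 1" and k1: "k - 1 \<ge> 1" using LV k2 unfolding e_def k_def by auto
  have ordP: "order x ?P = (if x = 0 then e else 0) + (if x = 1 then k - 1 else 0) + (if x = -1 then k - 1 else 0)
       + (if x = s then 1 else 0) + (if x = -s then 1 else 0)" for x
    by (simp add: order_mult lp_ne0 order_lp)
  have roots: "{x. poly ?P x = 0} = {0, 1, -1, s, -s}"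
    using e1 k1 s1 by (auto simp: poly_lp)
  have "mset_set {0, 1, -1, s, -s} = {#0, 1, -1, s, -s#}"
    using s1 by simp
  hence "mult_list A0 = image_mset (\<lambda>x. order x ?P) {#0, 1, -1, s, -s#}"
    unfolding mult_list_def cp roots by simp
  also have "\<dots> = {#e, k - 1, k - 1, 1, 1#}"
    using s1 unfolding ordP by simp
  finally show ?thesis unfolding e_def k_def .
qed

end


lemma order_local2:
  fixes p :: "real poly"
  assumes ev: "eventually (\<lambda>t. poly p t * (t - c)^a = (t - c)^b * g t) (at c)"
    and lim: "(g \<longlongrightarrow> L) (at c)" and L: "L \<noteq> 0" and ab: "a \<le> b"
  shows "order c p = b - a"
proof (rule order_local[OF _ lim L])
  have ne: "eventually (\<lambda>t. t \<noteq> c) (at c)" by (simp add: eventually_at_filter)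
  show "eventually (\<lambda>t. poly p t = (t - c)^(b - a) * g t) (at c)"
    using ev ne proof eventually_elim
    case (elim t)
    have "(t - c)^b = (t - c)^(b-a) * (t-c)^a" using ab by (simp add: power_add[symmetric])
    hence "poly p t * (t - c)^a = ((t - c)^(b - a) * g t) * (t-c)^a" using elim(1) by (simp add: ac_simps)
    thus ?case using elim(2) by simp
  qed
qed

lemma ev_ne_pt: "(c::real) \<noteq> x \<Longrightarrow> eventually (\<lambda>t. t \<noteq> x) (at c)"
  by (rule tendsto_imp_eventually_ne[OF tendsto_ident_at])

context tree2
begin

lemma finL[simp]: "finite L" and finV[simp]: "finite V" and finch[simp]: "finite (ch v)" by auto

lemma L_UN: "L = (\<Union>v\<in>V. ch v)" unfolding ch_def using parL' by auto
lemma ch_disj: "v \<in> V \<Longrightarrow> w \<in> V \<Longrightarrow> v \<noteq> w \<Longrightarrow> ch v \<inter> ch w = {}" unfolding ch_def by auto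

lemma card_L_sum: "card L = (\<Sum>v\<in>V. card (ch v))"
  unfolding L_UN by (rule card_UN_disjoint) (auto simp: ch_disj)

context
  fixes A :: "real^'n^'n"
  assumes AS: "A \<in> S_T E" and A01: "\<And>i j. i \<noteq> j \<Longrightarrow> A$i$j \<in> {0,1}"
begin

lemma A_edge: "i \<noteq> j \<Longrightarrow> E i j \<Longrightarrow> A$i$j = 1"
  using A01[of i j] AS unfolding S_T_def by auto

lemma A_rv: "v \<in> V \<Longrightarrow> A$r$v = 1" using A_edge E_rV rV by metis
lemma A_vl: "v \<in> V \<Longrightarrow> l \<in> ch v \<Longrightarrow> A$v$l = 1"
proof -
  assume v: "v \<in> V" and l: "l \<in> ch v"
  hence "l \<in> L" "par l = v" using ch_L unfolding ch_def by auto
  thus ?thesis using A_edge E_Lpar VL v by metis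
qed

lemma D_eq: "v \<in> V \<Longrightarrow> Dv A t v = t - A$v$v - (\<Sum>l\<in>ch v. 1 / (t - A$l$l))"
  unfolding Dv_def using A_vl by simp

lemma F_eq:
  assumes "\<And>l. l \<in> L \<Longrightarrow> t \<noteq> A$l$l" and "\<And>v. v \<in> V \<Longrightarrow> Dv A t v \<noteq> 0"
  shows "poly (charpoly A) t = (\<Prod>l\<in>L. t - A$l$l) * (\<Prod>v\<in>V. Dv A t v)
           * (t - A$r$r - (\<Sum>v\<in>V. 1 / Dv A t v))"
  using det_formula[OF AS assms] A_rv by simp


lemma lam_struct:
  assumes ord: "order lam (charpoly A) = card L + 1 - card V"
    and c2: "\<And>v. v \<in> V \<Longrightarrow> card (ch v) \<ge> 2"
  shows "(\<forall>l\<in>L. A$l$l = lam) \<and> A$r$r = lam"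
proof -
  define d where "d l = A$l$l" for l
  define b where "b v = A$v$v" for v
  define a where "a = A$r$r"
  define D where "D t v = Dv A t v" for t v
  define Lam where "Lam v = {l\<in>ch v. d l = lam}" for v
  define m where "m v = card (Lam v)" for v
  define Oth where "Oth v = ch v - Lam v" for v
  define As where "As = {v\<in>V. m v \<ge> 1}"
  define Bs where "Bs = {v\<in>V. m v = 0 \<and> D lam v = 0}"
  define Zs where "Zs = {v\<in>V. m v = 0 \<and> D lam v \<noteq> 0}"
  define del where "del v t = (t-lam)*(t - b v) - m v - (t-lam)*(\<Sum>l\<in>Oth v. 1/(t - d l))" for v t
  define Ee where "Ee v t = 1 + (\<Sum>l\<in>ch v. 1/((t - d l)*(lam - d l)))" for v t
  define L1 where "L1 = {l\<in>L. d l = lam}"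
  define L2 where "L2 = {l\<in>L. d l \<noteq> lam}"
  define N where "N = card L1"
  have Deq: "v\<in>V \<Longrightarrow> D t v = t - b v - (\<Sum>l\<in>ch v. 1/(t - d l))" for t v
    unfolding D_def b_def d_def by (rule D_eq)
  have m0: "v \<in> V \<Longrightarrow> m v = 0 \<Longrightarrow> l \<in> ch v \<Longrightarrow> d l \<noteq> lam" for v l
    unfolding m_def Lam_def by auto
  have OthL: "l \<in> Oth v \<Longrightarrow> d l \<noteq> lam" for l v unfolding Oth_def Lam_def by auto
  have Lam_ch: "Lam v \<subseteq> ch v" for v unfolding Lam_def by auto
  have delA: "v \<in> V \<Longrightarrow> t \<noteq> lam \<Longrightarrow> (t - lam) * D t v = del v t" for v t
  proof -
    assume v: "v \<in> V" and t: "t \<noteq> lam"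
    have "(\<Sum>l\<in>ch v. 1/(t - d l)) = (\<Sum>l\<in>Oth v. 1/(t - d l)) + (\<Sum>l\<in>Lam v. 1/(t - d l))"
      unfolding Oth_def by (rule sum.subset_diff[OF Lam_ch]) simp
    also have "(\<Sum>l\<in>Lam v. 1/(t - d l)) = m v / (t - lam)"
      unfolding m_def by (simp add: Lam_def)
    finally have "D t v = t - b v - (\<Sum>l\<in>Oth v. 1/(t - d l)) - m v / (t - lam)"
      using Deq[OF v] by simp
    thus ?thesis unfolding del_def using t by (simp add: field_simps)
  qed
  have EeZ: "v\<in>V \<Longrightarrow> m v = 0 \<Longrightarrow> (\<forall>l\<in>ch v. t \<noteq> d l) \<Longrightarrow> D t v = D lam v + (t-lam)*Ee v t" for v t
  proof -
    assume v: "v \<in> V" and mv: "m v = 0" and tl: "\<forall>l\<in>ch v. t \<noteq> d l"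
    have "(\<Sum>l\<in>ch v. 1/(lam - d l)) - (\<Sum>l\<in>ch v. 1/(t - d l)) = (t - lam) * (\<Sum>l\<in>ch v. 1/((t - d l)*(lam - d l)))"
      unfolding sum_subtractf[symmetric] sum_distrib_left
    proof (rule sum.cong[OF refl])
      fix l assume l: "l \<in> ch v"
      have "t - d l \<noteq> 0" "lam - d l \<noteq> 0" using tl l m0[OF v mv l] by auto
      thus "1/(lam - d l) - 1/(t - d l) = (t - lam) * (1/((t - d l)*(lam - d l)))"
        by (simp add: field_simps)
    qed
    thus ?thesis using Deq[OF v, of t] Deq[OF v, of lam] unfolding Ee_def by (simp add: algebra_simps)
  qed
  have del_lim: "v\<in>V \<Longrightarrow> (del v \<longlongrightarrow> - real (m v)) (at lam)" for v
  proof -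
    have "(del v \<longlongrightarrow> (lam-lam)*(lam - b v) - m v - (lam-lam)*(\<Sum>l\<in>Oth v. 1/(lam - d l))) (at lam)"
      unfolding del_def[abs_def] using OthL by (intro tendsto_intros) auto
    thus ?thesis by simp
  qed
  have Ee_lim: "v\<in>V \<Longrightarrow> m v = 0 \<Longrightarrow> (Ee v \<longlongrightarrow> Ee v lam) (at lam)" for v
    unfolding Ee_def[abs_def] using m0 by (intro tendsto_intros) auto
  have D_lim: "v\<in>V \<Longrightarrow> m v = 0 \<Longrightarrow> ((\<lambda>t. D t v) \<longlongrightarrow> D lam v) (at lam)" for v
  proof -
    assume v: "v \<in> V" and mv: "m v = 0"
    have "((\<lambda>t. t - b v - (\<Sum>l\<in>ch v. 1/(t - d l))) \<longlongrightarrow> lam - b v - (\<Sum>l\<in>ch v. 1/(lam - d l))) (at lam)"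
      using m0[OF v mv] by (intro tendsto_intros) auto
    thus ?thesis using Deq[OF v] by simp
  qed
  have Ee_pos: "v\<in>V \<Longrightarrow> m v = 0 \<Longrightarrow> Ee v lam > 0" for v
  proof -
    assume v: "v \<in> V" and mv: "m v = 0"
    have "(\<Sum>l\<in>ch v. 1/((lam - d l)*(lam - d l))) \<ge> 0" by (intro sum_nonneg) simp
    thus ?thesis unfolding Ee_def by simp
  qed
  have V_split: "V = As \<union> Bs \<union> Zs" unfolding As_def Bs_def Zs_def by auto
  have dAB: "As \<inter> Bs = {}" "As \<inter> Zs = {}" "Bs \<inter> Zs = {}" unfolding As_def Bs_def Zs_def by auto
  have sub: "As \<subseteq> V" "Bs \<subseteq> V" "Zs \<subseteq> V" unfolding As_def Bs_def Zs_def by auto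
  have prod_split: "(\<Prod>v\<in>V. f v) = (\<Prod>v\<in>As. f v) * (\<Prod>v\<in>Bs. f v) * (\<Prod>v\<in>Zs. f v)" for f :: "'n \<Rightarrow> real"
  proof -
    have "(\<Prod>v\<in>V. f v) = (\<Prod>v\<in>As \<union> Bs. f v) * (\<Prod>v\<in>Zs. f v)"
      unfolding V_split by (rule prod.union_disjoint) (use dAB in auto)
    also have "(\<Prod>v\<in>As \<union> Bs. f v) = (\<Prod>v\<in>As. f v) * (\<Prod>v\<in>Bs. f v)"
      by (rule prod.union_disjoint) (use dAB in auto)
    finally show ?thesis .
  qed
  have sum_split: "(\<Sum>v\<in>V. f v) = (\<Sum>v\<in>As. f v) + (\<Sum>v\<in>Bs. f v) + (\<Sum>v\<in>Zs. f v)" for f :: "'n \<Rightarrow> real"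
  proof -
    have "(\<Sum>v\<in>V. f v) = (\<Sum>v\<in>As \<union> Bs. f v) + (\<Sum>v\<in>Zs. f v)"
      unfolding V_split by (rule sum.union_disjoint) (use dAB in auto)
    also have "(\<Sum>v\<in>As \<union> Bs. f v) = (\<Sum>v\<in>As. f v) + (\<Sum>v\<in>Bs. f v)"
      by (rule sum.union_disjoint) (use dAB in auto)
    finally show ?thesis .
  qed
  have mA: "v \<in> As \<Longrightarrow> m v \<ge> 1" for v unfolding As_def by auto
  have mB: "v \<in> Bs \<Longrightarrow> m v = 0 \<and> D lam v = 0" for v unfolding Bs_def by auto
  have mZ: "v \<in> Zs \<Longrightarrow> m v = 0 \<and> D lam v \<noteq> 0" for v unfolding Zs_def by auto
  have ev1: "eventually (\<lambda>t. t \<noteq> lam) (at lam)" by (simp add: eventually_at_filter)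
  have ev2: "eventually (\<lambda>t. \<forall>l\<in>L2. t \<noteq> d l) (at lam)"
    by (rule eventually_ball_finite) (auto simp: L2_def intro!: ev_ne_pt)
  have ev3: "eventually (\<lambda>t. \<forall>v\<in>As. del v t \<noteq> 0) (at lam)"
  proof (rule eventually_ball_finite)
    show "finite As" using sub by (auto intro: finite_subset)
    show "\<forall>v\<in>As. eventually (\<lambda>t. del v t \<noteq> 0) (at lam)"
    proof
      fix v assume v: "v \<in> As"
      hence "v \<in> V" "- real (m v) \<noteq> 0" using sub mA[OF v] by auto
      thus "eventually (\<lambda>t. del v t \<noteq> 0) (at lam)"
        using tendsto_imp_eventually_ne[OF del_lim] by blast
    qed
  qed
  have ev4: "eventually (\<lambda>t. \<forall>v\<in>Bs \<union> Zs. Ee v t \<noteq> 0) (at lam)"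
  proof (rule eventually_ball_finite)
    show "finite (Bs \<union> Zs)" by auto
    show "\<forall>v\<in>Bs \<union> Zs. eventually (\<lambda>t. Ee v t \<noteq> 0) (at lam)"
    proof
      fix v assume v: "v \<in> Bs \<union> Zs"
      hence vV: "v \<in> V" and mv: "m v = 0" using sub mB mZ by auto
      show "eventually (\<lambda>t. Ee v t \<noteq> 0) (at lam)"
        using tendsto_imp_eventually_ne[OF Ee_lim[OF vV mv]] Ee_pos[OF vV mv] by simp
    qed
  qed
  have ev5: "eventually (\<lambda>t. \<forall>v\<in>Zs. D t v \<noteq> 0) (at lam)"
  proof (rule eventually_ball_finite)
    show "finite Zs" by auto
    show "\<forall>v\<in>Zs. eventually (\<lambda>t. D t v \<noteq> 0) (at lam)"
    proof
      fix v assume v: "v \<in> Zs"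
      hence vV: "v \<in> V" and mv: "m v = 0" and nz: "D lam v \<noteq> 0" using sub mZ by auto
      show "eventually (\<lambda>t. D t v \<noteq> 0) (at lam)"
        using tendsto_imp_eventually_ne[OF D_lim[OF vV mv] nz] .
    qed
  qed
  define good where "good t \<longleftrightarrow> t \<noteq> lam \<and> (\<forall>l\<in>L2. t \<noteq> d l) \<and> (\<forall>v\<in>As. del v t \<noteq> 0)
      \<and> (\<forall>v\<in>Bs \<union> Zs. Ee v t \<noteq> 0) \<and> (\<forall>v\<in>Zs. D t v \<noteq> 0)" for t
  have evG: "eventually good (at lam)"
    unfolding good_def using ev1 ev2 ev3 ev4 ev5 by (intro eventually_conj) auto
  have gL: "good t \<Longrightarrow> l \<in> L \<Longrightarrow> t \<noteq> d l" for t l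
    unfolding good_def L2_def by auto
  have gA: "good t \<Longrightarrow> v \<in> As \<Longrightarrow> D t v = del v t / (t - lam)" for t v
  proof -
    assume g: "good t" and v: "v \<in> As"
    hence "t \<noteq> lam" unfolding good_def by auto
    thus ?thesis using delA[of v t] v sub by (auto simp: field_simps)
  qed
  have gB: "good t \<Longrightarrow> v \<in> Bs \<Longrightarrow> D t v = (t - lam) * Ee v t" for t v
  proof -
    assume g: "good t" and v: "v \<in> Bs"
    have "\<forall>l\<in>ch v. t \<noteq> d l" using gL[OF g] ch_L by auto
    thus ?thesis using EeZ[of v t] v sub mB[OF v] by auto
  qed
  have gD: "good t \<Longrightarrow> v \<in> V \<Longrightarrow> D t v \<noteq> 0" for t v
  proof -
    assume g: "good t" and v: "v \<in> V"
    have g': "t \<noteq> lam" "\<forall>v\<in>As. del v t \<noteq> 0" "\<forall>v\<in>Bs \<union> Zs. Ee v t \<noteq> 0" "\<forall>v\<in>Zs. D t v \<noteq> 0"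
      using g unfolding good_def by auto
    have "v \<in> As \<or> v \<in> Bs \<or> v \<in> Zs" using v V_split by auto
    thus ?thesis
    proof (elim disjE)
      assume v: "v \<in> As" thus ?thesis using gA[OF g v] g' by simp
    next
      assume v: "v \<in> Bs" thus ?thesis using gB[OF g v] g' by simp
    next
      assume v: "v \<in> Zs" thus ?thesis using g' by simp
    qed
  qed
  define R where "R t = t - a - (\<Sum>v\<in>V. 1 / D t v)" for t
  define K where "K t = (\<Prod>l\<in>L2. t - d l) * (\<Prod>v\<in>As. del v t) * (\<Prod>v\<in>Bs. Ee v t) * (\<Prod>v\<in>Zs. D t v)" for t
  define K0 where "K0 = (\<Prod>l\<in>L2. lam - d l) * (\<Prod>v\<in>As. - real (m v)) * (\<Prod>v\<in>Bs. Ee v lam) * (\<Prod>v\<in>Zs. D lam v)"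
  have K_lim: "(K \<longlongrightarrow> K0) (at lam)"
    unfolding K_def[abs_def] K0_def
  proof (intro tendsto_mult tendsto_prod)
    show "((\<lambda>t. t - d l) \<longlongrightarrow> lam - d l) (at lam)" for l by (intro tendsto_intros)
    show "v \<in> As \<Longrightarrow> (del v \<longlongrightarrow> - real (m v)) (at lam)" for v using del_lim sub by auto
    show "v \<in> Bs \<Longrightarrow> (Ee v \<longlongrightarrow> Ee v lam) (at lam)" for v using Ee_lim sub mB by auto
    show "v \<in> Zs \<Longrightarrow> ((\<lambda>t. D t v) \<longlongrightarrow> D lam v) (at lam)" for v using D_lim sub mZ by auto
  qed
  have K0_nz: "K0 \<noteq> 0"
  proof -
    have "(\<Prod>l\<in>L2. lam - d l) \<noteq> 0" unfolding L2_def by (simp add: prod_zero_iff)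
    moreover have "(\<Prod>v\<in>As. - real (m v)) \<noteq> 0" using mA by (simp add: prod_zero_iff) (metis Suc_le_eq)
    moreover have "(\<Prod>v\<in>Bs. Ee v lam) \<noteq> 0" using Ee_pos mB sub
      by (simp add: prod_zero_iff) (metis less_irrefl subsetD)
    moreover have "(\<Prod>v\<in>Zs. D lam v) \<noteq> 0" using mZ by (simp add: prod_zero_iff)
    ultimately show ?thesis unfolding K0_def by simp
  qed
  have main: "good t \<Longrightarrow> poly (charpoly A) t * (t-lam)^card As = (t-lam)^(N + card Bs) * K t * R t" for t
  proof -
    assume g: "good t"
    have F: "poly (charpoly A) t = (\<Prod>l\<in>L. t - d l) * (\<Prod>v\<in>V. D t v) * R t"
      unfolding d_def D_def R_def a_def
      by (rule F_eq) (use gL[OF g] gD[OF g] in \<open>auto simp: d_def D_def\<close>)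
    have pL: "(\<Prod>l\<in>L. t - d l) = (t-lam)^N * (\<Prod>l\<in>L2. t - d l)"
    proof -
      have "L = L1 \<union> L2" "L1 \<inter> L2 = {}" unfolding L1_def L2_def by auto
      hence "(\<Prod>l\<in>L. t - d l) = (\<Prod>l\<in>L1. t - d l) * (\<Prod>l\<in>L2. t - d l)"
        by (simp add: prod.union_disjoint)
      moreover have "(\<Prod>l\<in>L1. t - d l) = (t-lam)^N"
        unfolding N_def by (simp add: L1_def)
      ultimately show ?thesis by simp
    qed
    have pA: "(\<Prod>v\<in>As. D t v) * (t-lam)^card As = (\<Prod>v\<in>As. del v t)"
    proof -
      have "(\<Prod>v\<in>As. del v t) = (\<Prod>v\<in>As. (t - lam) * D t v)"
        using delA g sub unfolding good_def by (intro prod.cong) auto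
      thus ?thesis by (simp add: prod.distrib mult.commute)
    qed
    have pB: "(\<Prod>v\<in>Bs. D t v) = (t-lam)^card Bs * (\<Prod>v\<in>Bs. Ee v t)"
    proof -
      have "(\<Prod>v\<in>Bs. D t v) = (\<Prod>v\<in>Bs. (t - lam) * Ee v t)"
        using gB[OF g] by (intro prod.cong) auto
      thus ?thesis by (simp add: prod.distrib)
    qed
    show ?thesis unfolding F pL prod_split[of "D t"] K_def power_add
      using pA pB by (simp add: ac_simps)
  qed
  have N_sum: "N = (\<Sum>v\<in>V. m v)"
  proof -
    have "L1 = (\<Union>v\<in>V. Lam v)"
    proof
      show "L1 \<subseteq> (\<Union>v\<in>V. Lam v)"
      proof
        fix l assume "l \<in> L1"
        hence l: "l \<in> L" "d l = lam" unfolding L1_def by auto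
        hence "l \<in> Lam (par l)" unfolding Lam_def using ch_par by auto
        thus "l \<in> (\<Union>v\<in>V. Lam v)" using parL'[OF l(1)] by auto
      qed
      show "(\<Union>v\<in>V. Lam v) \<subseteq> L1" unfolding L1_def Lam_def using ch_L by auto
    qed
    hence "card L1 = (\<Sum>v\<in>V. card (Lam v))"
      by (simp, intro card_UN_disjoint) (auto simp: Lam_def dest: ch_disj)
    thus ?thesis unfolding N_def m_def .
  qed
  have ind: "S \<subseteq> V \<Longrightarrow> (\<Sum>v\<in>V. if v \<in> S then 1 else 0 :: nat) = card S" for S
  proof -
    assume S: "S \<subseteq> V"
    have "(\<Sum>v\<in>V. if v \<in> S then 1 else 0 :: nat) = (\<Sum>v\<in>S. if v \<in> S then 1 else 0)"
      using S by (intro sum.mono_neutral_right) auto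
    thus ?thesis by simp
  qed
  have mle: "v \<in> V \<Longrightarrow> m v \<le> card (ch v)" for v unfolding m_def by (intro card_mono) (auto simp: Lam_def)
  have ineq_v: "v \<in> V \<Longrightarrow> m v + (if v \<in> Bs then 1 else 0) + 1 \<le> (if v \<in> As then 1 else 0) + card (ch v)" for v
  proof -
    assume v: "v \<in> V"
    have f1: "m v \<le> card (ch v)" "card (ch v) \<ge> 2" using mle[OF v] c2[OF v] by auto
    have f2: "v \<notin> As \<Longrightarrow> m v = 0" using v unfolding As_def by auto
    have f3: "v \<in> As \<Longrightarrow> v \<notin> Bs" using dAB by auto
    show ?thesis
    proof (cases "v \<in> As")
      case True thus ?thesis using f1 f3 by simp
    next
      case False thus ?thesis using f1 f2 by simp
    qed
  qed
  have ineq: "N + card Bs + card V \<le> card As + card L"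
  proof -
    have "(\<Sum>v\<in>V. m v + (if v \<in> Bs then 1 else 0) + 1) \<le> (\<Sum>v\<in>V. (if v \<in> As then 1 else 0) + card (ch v))"
      by (rule sum_mono) (rule ineq_v)
    thus ?thesis unfolding sum.distrib N_sum ind[OF sub(1)] ind[OF sub(2)] card_L_sum by simp
  qed
  have AleN: "card As \<le> N"
  proof -
    have "card As = (\<Sum>v\<in>As. 1)" by simp
    also have "\<dots> \<le> (\<Sum>v\<in>As. m v)" using mA by (intro sum_mono) auto
    also have "\<dots> \<le> (\<Sum>v\<in>V. m v)" using sub by (intro sum_mono2) auto
    finally show ?thesis using N_sum by simp
  qed
  have ordF: "eventually (\<lambda>t. poly (charpoly A) t * (t-lam)^p = (t-lam)^q * G t) (at lam) \<Longrightarrow>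
      (G \<longlongrightarrow> G0) (at lam) \<Longrightarrow> G0 \<noteq> 0 \<Longrightarrow> p \<le> q \<Longrightarrow> q - p = card L + 1 - card V" for p q G G0
    using order_local2[of "charpoly A" lam p q G G0] ord by simp
  have gt: "good t \<Longrightarrow> t \<noteq> lam" for t unfolding good_def by auto
  have Ac: "card As \<le> card V" "card Bs \<le> card V" using sub by (auto intro: card_mono)
  show ?thesis
  proof (cases "Bs = {}")
    case False
    define rho where "rho t = (t-lam)*(t-a) - (\<Sum>v\<in>As. (t-lam)^2/del v t) - (\<Sum>v\<in>Bs. 1/Ee v t) - (\<Sum>v\<in>Zs. (t-lam)/D t v)" for t
    have rho_eq: "good t \<Longrightarrow> (t - lam) * R t = rho t" for t
    proof -
      assume g: "good t"
      have tl: "t - lam \<noteq> 0" using gt[OF g] by simp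
      have "(t - lam) * R t = (t-lam)*(t-a) - (\<Sum>v\<in>V. (t-lam) / D t v)"
        unfolding R_def by (simp add: right_diff_distrib sum_distrib_left)
      also have "(\<Sum>v\<in>V. (t-lam) / D t v) = (\<Sum>v\<in>As. (t-lam)^2/del v t) + (\<Sum>v\<in>Bs. 1/Ee v t) + (\<Sum>v\<in>Zs. (t-lam)/D t v)"
        unfolding sum_split
      proof -
        have "(\<Sum>v\<in>As. (t-lam)/D t v) = (\<Sum>v\<in>As. (t-lam)^2/del v t)"
          using gA[OF g] tl by (intro sum.cong) (auto simp: power2_eq_square)
        moreover have "(\<Sum>v\<in>Bs. (t-lam)/D t v) = (\<Sum>v\<in>Bs. 1/Ee v t)"
          using gB[OF g] tl by (intro sum.cong) auto
        ultimately show "(\<Sum>v\<in>As. (t-lam)/D t v) + (\<Sum>v\<in>Bs. (t-lam)/D t v) + (\<Sum>v\<in>Zs. (t-lam)/D t v)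
            = (\<Sum>v\<in>As. (t-lam)^2/del v t) + (\<Sum>v\<in>Bs. 1/Ee v t) + (\<Sum>v\<in>Zs. (t-lam)/D t v)" by simp
      qed
      finally show ?thesis unfolding rho_def by simp
    qed
    have "(rho \<longlongrightarrow> (lam-lam)*(lam-a) - (\<Sum>v\<in>As. (lam-lam)^2/(- real (m v))) - (\<Sum>v\<in>Bs. 1/Ee v lam)
        - (\<Sum>v\<in>Zs. (lam-lam)/D lam v)) (at lam)"
      unfolding rho_def[abs_def]
    proof (intro tendsto_intros)
      show "v \<in> As \<Longrightarrow> (del v \<longlongrightarrow> - real (m v)) (at lam)" for v using del_lim sub by auto
      show "v \<in> As \<Longrightarrow> - real (m v) \<noteq> 0" for v using mA[of v] by auto
      show "v \<in> Bs \<Longrightarrow> (Ee v \<longlongrightarrow> Ee v lam) (at lam)" for v using Ee_lim sub mB by auto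
      show "v \<in> Bs \<Longrightarrow> Ee v lam \<noteq> 0" for v using Ee_pos sub mB by (metis less_irrefl subsetD)
      show "v \<in> Zs \<Longrightarrow> ((\<lambda>t. D t v) \<longlongrightarrow> D lam v) (at lam)" for v using D_lim sub mZ by auto
      show "v \<in> Zs \<Longrightarrow> D lam v \<noteq> 0" for v using mZ by auto
    qed
    hence rho_lim: "(rho \<longlongrightarrow> - (\<Sum>v\<in>Bs. 1/Ee v lam)) (at lam)" by simp
    have pos: "(\<Sum>v\<in>Bs. 1/Ee v lam) > 0"
    proof (rule sum_pos)
      show "finite Bs" "Bs \<noteq> {}" using False by auto
      fix v assume v: "v \<in> Bs"
      hence "Ee v lam > 0" using Ee_pos[of v] sub mB[OF v] by auto
      thus "1 / Ee v lam > 0" by simp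
    qed
    have ev: "eventually (\<lambda>t. poly (charpoly A) t * (t-lam)^(card As + 1) = (t-lam)^(N + card Bs) * (K t * rho t)) (at lam)"
      using evG proof eventually_elim
      case (elim t)
      have "poly (charpoly A) t * (t-lam)^(card As + 1) = (poly (charpoly A) t * (t-lam)^card As) * (t - lam)"
        by simp
      also have "\<dots> = (t-lam)^(N + card Bs) * K t * ((t - lam) * R t)" using main[OF elim] by simp
      also have "\<dots> = (t-lam)^(N + card Bs) * (K t * rho t)" using rho_eq[OF elim] by simp
      finally show ?case .
    qed
    have "card Bs \<ge> 1" using False by (simp add: Suc_le_eq card_gt_0_iff)
    hence le: "card As + 1 \<le> N + card Bs" using AleN by simp
    have "N + card Bs - (card As + 1) = card L + 1 - card V"
      by (rule ordF[OF ev tendsto_mult[OF K_lim rho_lim] _ le]) (use K0_nz pos in simp)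
    thus ?thesis using ineq le by simp
  next
    case Bs0: True
    define R' where "R' t = t - a - (\<Sum>v\<in>As. (t-lam)/del v t) - (\<Sum>v\<in>Zs. 1/D t v)" for t
    have R_eq: "good t \<Longrightarrow> R t = R' t" for t
    proof -
      assume g: "good t"
      have "(\<Sum>v\<in>As. 1/D t v) = (\<Sum>v\<in>As. (t-lam)/del v t)"
        using gA[OF g] by (intro sum.cong) auto
      thus ?thesis unfolding R_def R'_def sum_split Bs0 by simp
    qed
    define R0 where "R0 = lam - a - (\<Sum>v\<in>Zs. 1/D lam v)"
    have "(R' \<longlongrightarrow> lam - a - (\<Sum>v\<in>As. (lam-lam)/(- real (m v))) - (\<Sum>v\<in>Zs. 1/D lam v)) (at lam)"
      unfolding R'_def[abs_def]
    proof (intro tendsto_intros)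
      show "v \<in> As \<Longrightarrow> (del v \<longlongrightarrow> - real (m v)) (at lam)" for v using del_lim sub by auto
      show "v \<in> As \<Longrightarrow> - real (m v) \<noteq> 0" for v using mA[of v] by auto
      show "v \<in> Zs \<Longrightarrow> ((\<lambda>t. D t v) \<longlongrightarrow> D lam v) (at lam)" for v using D_lim sub mZ by auto
      show "v \<in> Zs \<Longrightarrow> D lam v \<noteq> 0" for v using mZ by auto
    qed
    hence R'_lim: "(R' \<longlongrightarrow> R0) (at lam)" unfolding R0_def by simp
    show ?thesis
    proof (cases "R0 = 0")
      case False
      have ev: "eventually (\<lambda>t. poly (charpoly A) t * (t-lam)^(card As) = (t-lam)^N * (K t * R' t)) (at lam)"
        using evG proof eventually_elim
        case (elim t) thus ?case using main[OF elim] R_eq[OF elim] Bs0 by simp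
      qed
      have "N - card As = card L + 1 - card V"
        by (rule ordF[OF ev tendsto_mult[OF K_lim R'_lim] _ AleN]) (use K0_nz False in simp)
      thus ?thesis using ineq Bs0 AleN by simp
    next
      case R00: True
      define rho3 where "rho3 t = 1 - (\<Sum>v\<in>As. 1/del v t) + (\<Sum>v\<in>Zs. Ee v t / (D t v * D lam v))" for t
      have aeq: "a = lam - (\<Sum>v\<in>Zs. 1/D lam v)" using R00 unfolding R0_def by simp
      have R'_eq: "good t \<Longrightarrow> R' t = (t - lam) * rho3 t" for t
      proof -
        assume g: "good t"
        have tl: "t - lam \<noteq> 0" using gt[OF g] by simp
        have "(\<Sum>v\<in>Zs. 1/D lam v) - (\<Sum>v\<in>Zs. 1/D t v) = (t - lam) * (\<Sum>v\<in>Zs. Ee v t / (D t v * D lam v))"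
          unfolding sum_subtractf[symmetric] sum_distrib_left
        proof (rule sum.cong[OF refl])
          fix v assume v: "v \<in> Zs"
          have vV: "v \<in> V" and mv: "m v = 0" and nz: "D lam v \<noteq> 0" using v sub mZ by auto
          have "\<forall>l\<in>ch v. t \<noteq> d l" using gL[OF g] ch_L by auto
          hence De: "D t v = D lam v + (t - lam) * Ee v t" using EeZ[OF vV mv] by simp
          have nzt: "D t v \<noteq> 0" using gD[OF g vV] .
          show "1/D lam v - 1/D t v = (t - lam) * (Ee v t / (D t v * D lam v))"
            using nz nzt De by (simp add: field_simps)
        qed
        moreover have "(\<Sum>v\<in>As. (t-lam)/del v t) = (t - lam) * (\<Sum>v\<in>As. 1/del v t)"
          by (simp add: sum_distrib_left)
        ultimately show ?thesis unfolding R'_def rho3_def aeq by (simp add: algebra_simps)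
      qed
      have "(rho3 \<longlongrightarrow> 1 - (\<Sum>v\<in>As. 1/(- real (m v))) + (\<Sum>v\<in>Zs. Ee v lam / (D lam v * D lam v))) (at lam)"
        unfolding rho3_def[abs_def]
      proof (intro tendsto_intros)
        show "v \<in> As \<Longrightarrow> (del v \<longlongrightarrow> - real (m v)) (at lam)" for v using del_lim sub by auto
        show "v \<in> As \<Longrightarrow> - real (m v) \<noteq> 0" for v using mA[of v] by auto
        show "v \<in> Zs \<Longrightarrow> (Ee v \<longlongrightarrow> Ee v lam) (at lam)" for v using Ee_lim sub mZ by auto
        show "v \<in> Zs \<Longrightarrow> ((\<lambda>t. D t v) \<longlongrightarrow> D lam v) (at lam)" for v using D_lim sub mZ by auto
        show "v \<in> Zs \<Longrightarrow> D lam v * D lam v \<noteq> 0" for v using mZ by auto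
      qed
      moreover have "1 - (\<Sum>v\<in>As. 1/(- real (m v))) + (\<Sum>v\<in>Zs. Ee v lam / (D lam v * D lam v)) > 0"
      proof -
        have "(\<Sum>v\<in>As. 1/(- real (m v))) \<le> 0" by (intro sum_nonpos) simp
        moreover have "(\<Sum>v\<in>Zs. Ee v lam / (D lam v * D lam v)) \<ge> 0"
        proof (rule sum_nonneg)
          fix v assume v: "v \<in> Zs"
          hence "Ee v lam > 0" "D lam v \<noteq> 0" using Ee_pos[of v] sub mZ[OF v] by auto
          moreover have "D lam v * D lam v > 0" using \<open>D lam v \<noteq> 0\<close> by (metis not_real_square_gt_zero)
          ultimately show "Ee v lam / (D lam v * D lam v) \<ge> 0" by simp
        qed
        ultimately show ?thesis by simp
      qed
      ultimately obtain r3 where rho3_lim: "(rho3 \<longlongrightarrow> r3) (at lam)" and r3: "r3 \<noteq> 0" by force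
      have ev: "eventually (\<lambda>t. poly (charpoly A) t * (t-lam)^(card As) = (t-lam)^(N + 1) * (K t * rho3 t)) (at lam)"
        using evG proof eventually_elim
        case (elim t) thus ?case using main[OF elim] R_eq[OF elim] R'_eq[OF elim] Bs0 by simp
      qed
      have le: "card As \<le> N + 1" using AleN by simp
      have eqo: "N + 1 - card As = card L + 1 - card V"
        by (rule ordF[OF ev tendsto_mult[OF K_lim rho3_lim] _ le]) (use K0_nz r3 in simp)
      have eqs: "N + card Bs + card V = card As + card L" using eqo ineq AleN Bs0 by simp
      have eqv: "m v + (if v \<in> Bs then 1 else 0) + 1 = (if v \<in> As then 1 else 0) + card (ch v)" if v: "v \<in> V" for v
      proof (rule sum_mono_inv[OF _ _ v])
        show "(\<Sum>v\<in>V. m v + (if v \<in> Bs then 1 else 0) + 1) = (\<Sum>v\<in>V. (if v \<in> As then 1 else 0) + card (ch v))"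
          unfolding sum.distrib N_sum ind[OF sub(1)] ind[OF sub(2)] card_L_sum[symmetric] using eqs N_sum by simp
      qed (use ineq_v in auto)
      have allA: "v \<in> V \<Longrightarrow> v \<in> As \<and> m v = card (ch v)" for v
      proof -
        assume v: "v \<in> V"
        have e: "m v + 1 = (if v \<in> As then 1 else 0) + card (ch v)" using eqv[OF v] Bs0 by simp
        show ?thesis
        proof (cases "v \<in> As")
          case True thus ?thesis using e by simp
        next
          case False
          hence "m v = 0" using v unfolding As_def by auto
          thus ?thesis using e False c2[OF v] by simp
        qed
      qed
      have Lam_eq: "v \<in> V \<Longrightarrow> Lam v = ch v" for v
        using allA[of v] Lam_ch[of v] unfolding m_def by (intro card_subset_eq) auto
      have dl: "\<forall>l\<in>L. A$l$l = lam"
      proof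
        fix l assume l: "l \<in> L"
        hence "l \<in> Lam (par l)" using Lam_eq[OF parL'[OF l]] ch_par[OF l] by simp
        thus "A$l$l = lam" unfolding Lam_def d_def by simp
      qed
      have "Zs = {}" using allA dAB sub by blast
      hence "a = lam" using aeq by simp
      thus ?thesis using dl unfolding a_def by simp
    qed
  qed
qed

lemma mu_struct:
  assumes dl: "\<forall>l\<in>L. A$l$l = lam" and ar: "A$r$r = lam" and mu: "mu \<noteq> lam"
    and ordm: "order mu (charpoly A) = card V - 1" and k3: "card V \<ge> 3"
    and c2: "\<And>v. v \<in> V \<Longrightarrow> card (ch v) \<ge> 2"
  shows "\<forall>v\<in>V. (mu - A$v$v) * (mu - lam) = card (ch v)"
proof -
  define b where "b v = A$v$v" for v
  define c where "c v = real (card (ch v))" for v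
  define f where "f v t = (t - b v) * (t - lam) - c v" for v t
  define g where "g v t = t + mu - b v - lam" for v t
  define I where "I = {v\<in>V. f v mu = 0}"
  define J where "J = V - I"
  define n where "n = card L"
  define k where "k = card V"
  have fg: "f v t = f v mu + (t - mu) * g v t" for v t unfolding f_def g_def by (simp add: algebra_simps)
  have fI: "v \<in> I \<Longrightarrow> f v t = (t - mu) * g v t" for v t using fg[of v t] unfolding I_def by simp
  have gI: "v \<in> I \<Longrightarrow> (mu - lam) * g v mu = (mu - lam)^2 + c v" for v
  proof -
    assume "v \<in> I"
    hence "(mu - b v) * (mu - lam) = c v" unfolding I_def f_def by simp
    thus ?thesis unfolding g_def by (simp add: algebra_simps power2_eq_square)
  qed
  have cpos: "v \<in> V \<Longrightarrow> c v > 0" for v unfolding c_def using c2[of v] by simp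
  have gI0: "v \<in> I \<Longrightarrow> g v mu \<noteq> 0" for v
  proof -
    assume v: "v \<in> I"
    hence "c v > 0" using cpos unfolding I_def by auto
    hence "(mu - lam) * g v mu > 0" using gI[OF v] by (simp add: add_nonneg_pos)
    thus ?thesis by auto
  qed
  have Deq: "v \<in> V \<Longrightarrow> t \<noteq> lam \<Longrightarrow> Dv A t v = f v t / (t - lam)" for v t
  proof -
    assume v: "v \<in> V" and t: "t \<noteq> lam"
    have se: "(\<Sum>l\<in>ch v. 1 / (t - A$l$l)) = c v / (t - lam)"
      unfolding c_def using dl ch_L by (simp add: subset_iff)
    have "Dv A t v = t - b v - c v / (t - lam)" using D_eq[OF v, of t] se unfolding b_def by simp
    also have "\<dots> = f v t / (t - lam)" unfolding f_def using t by (simp add: field_simps)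
    finally show ?thesis .
  qed
  have VIJ: "V = I \<union> J" "I \<inter> J = {}" "I \<subseteq> V" "J \<subseteq> V" unfolding I_def J_def by auto
  have ev1: "eventually (\<lambda>t. t \<noteq> mu \<and> t \<noteq> lam) (at mu)"
    using ev_ne_pt[OF mu] by (simp add: eventually_at_filter eventually_conj_iff)
  have ev2: "eventually (\<lambda>t. \<forall>v\<in>J. f v t \<noteq> 0) (at mu)"
  proof (rule eventually_ball_finite)
    show "finite J" unfolding J_def by simp
    show "\<forall>v\<in>J. eventually (\<lambda>t. f v t \<noteq> 0) (at mu)"
    proof
      fix v assume v: "v \<in> J"
      have "((\<lambda>t. f v t) \<longlongrightarrow> f v mu) (at mu)" unfolding f_def by (intro tendsto_intros)
      moreover have "f v mu \<noteq> 0" using v unfolding J_def I_def by auto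
      ultimately show "eventually (\<lambda>t. f v t \<noteq> 0) (at mu)" by (rule tendsto_imp_eventually_ne)
    qed
  qed
  have ev3: "eventually (\<lambda>t. \<forall>v\<in>I. g v t \<noteq> 0) (at mu)"
  proof (rule eventually_ball_finite)
    show "finite I" unfolding I_def by simp
    show "\<forall>v\<in>I. eventually (\<lambda>t. g v t \<noteq> 0) (at mu)"
    proof
      fix v assume v: "v \<in> I"
      have "((\<lambda>t. g v t) \<longlongrightarrow> g v mu) (at mu)" unfolding g_def by (intro tendsto_intros)
      thus "eventually (\<lambda>t. g v t \<noteq> 0) (at mu)" using gI0[OF v] by (rule tendsto_imp_eventually_ne)
    qed
  qed
  define good where "good t \<longleftrightarrow> (t \<noteq> mu \<and> t \<noteq> lam) \<and> (\<forall>v\<in>J. f v t \<noteq> 0) \<and> (\<forall>v\<in>I. g v t \<noteq> 0)" for t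
  have evG: "eventually good (at mu)" using ev1 ev2 ev3 by eventually_elim (simp add: good_def)
  have gf: "good t \<Longrightarrow> v \<in> V \<Longrightarrow> f v t \<noteq> 0" for t v
  proof -
    assume g: "good t" and v: "v \<in> V"
    show ?thesis
    proof (cases "v \<in> I")
      case True thus ?thesis using fI[OF True, of t] g unfolding good_def by auto
    next
      case False thus ?thesis using v g unfolding good_def J_def by auto
    qed
  qed
  have common: "good t \<Longrightarrow> poly (charpoly A) t * (t - lam)^k = (t - lam)^(n+1) * (\<Prod>v\<in>V. f v t) * (1 - (\<Sum>v\<in>V. 1 / f v t))" for t
  proof -
    assume g: "good t"
    have tl: "t - lam \<noteq> 0" using g unfolding good_def by auto
    have F: "poly (charpoly A) t = (\<Prod>l\<in>L. t - A$l$l) * (\<Prod>v\<in>V. Dv A t v) * (t - A$r$r - (\<Sum>v\<in>V. 1 / Dv A t v))"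
    proof (rule F_eq)
      show "l \<in> L \<Longrightarrow> t \<noteq> A$l$l" for l using dl tl by auto
      show "v \<in> V \<Longrightarrow> Dv A t v \<noteq> 0" for v using Deq[of v t] gf[OF g, of v] tl by simp
    qed
    have p1: "(\<Prod>l\<in>L. t - A$l$l) = (t - lam)^n" unfolding n_def using dl by simp
    have p2: "(\<Prod>v\<in>V. Dv A t v) * (t - lam)^k = (\<Prod>v\<in>V. f v t)"
    proof -
      have "(\<Prod>v\<in>V. f v t) = (\<Prod>v\<in>V. (t - lam) * Dv A t v)"
        using Deq tl by (intro prod.cong) auto
      thus ?thesis unfolding k_def by (simp add: prod.distrib mult.commute)
    qed
    have p3: "t - A$r$r - (\<Sum>v\<in>V. 1 / Dv A t v) = (t - lam) * (1 - (\<Sum>v\<in>V. 1 / f v t))"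
    proof -
      have "(\<Sum>v\<in>V. 1 / Dv A t v) = (\<Sum>v\<in>V. (t - lam) * (1 / f v t))"
        using Deq tl by (intro sum.cong) auto
      also have "\<dots> = (t - lam) * (\<Sum>v\<in>V. 1 / f v t)" by (simp only: sum_distrib_left)
      finally show ?thesis using ar by (simp add: algebra_simps)
    qed
    show ?thesis unfolding F p1 p3 using p2 by (simp add: ac_simps)
  qed
  have ordF: "eventually (\<lambda>t. poly (charpoly A) t * (t-mu)^p = (t-mu)^q * G t) (at mu) \<Longrightarrow>
      (G \<longlongrightarrow> G0) (at mu) \<Longrightarrow> G0 \<noteq> 0 \<Longrightarrow> p \<le> q \<Longrightarrow> q - p = k - 1" for p q G G0
    using order_local2[of "charpoly A" mu p q G G0] ordm unfolding k_def by simp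
  have gt: "good t \<Longrightarrow> t \<noteq> mu \<and> t \<noteq> lam" for t unfolding good_def by auto
  have ml: "mu - lam \<noteq> 0" using mu by simp
  have gen: "(mu - lam) * g v mu = f v mu + (mu - lam)^2 + c v" for v
    unfolding f_def g_def by (simp add: algebra_simps power2_eq_square)
  show ?thesis
  proof (rule ccontr)
    assume nall: "\<not> (\<forall>v\<in>V. (mu - A$v$v) * (mu - lam) = card (ch v))"
    have "I \<noteq> V" using nall unfolding I_def f_def b_def c_def by auto
    hence cI: "card I < k" unfolding k_def using VIJ(3) by (meson finV psubsetI psubset_card_mono)
    show False
    proof (cases "I = {}")
      case False
      define H where "H t = (t - mu) * (1 - (\<Sum>v\<in>J. 1/f v t)) - (\<Sum>v\<in>I. 1/g v t)" for t
      define G where "G t = (t-lam)^(n+1)/(t-lam)^k * (\<Prod>v\<in>I. g v t) * (\<Prod>v\<in>J. f v t) * H t" for t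
      have ev: "eventually (\<lambda>t. poly (charpoly A) t * (t-mu)^1 = (t-mu)^(card I) * G t) (at mu)"
        using evG proof eventually_elim
        case (elim t)
        have tm: "t - mu \<noteq> 0" and tl: "t - lam \<noteq> 0" using gt[OF elim] by auto
        have pI: "(\<Prod>v\<in>I. f v t) = (t-mu)^(card I) * (\<Prod>v\<in>I. g v t)"
        proof -
          have "(\<Prod>v\<in>I. f v t) = (\<Prod>v\<in>I. (t - mu) * g v t)" using fI by (intro prod.cong) auto
          thus ?thesis by (simp add: prod.distrib)
        qed
        have pV: "(\<Prod>v\<in>V. f v t) = (t-mu)^(card I) * (\<Prod>v\<in>I. g v t) * (\<Prod>v\<in>J. f v t)"
          using pI unfolding VIJ(1) by (simp add: prod.union_disjoint VIJ(2))
        have sI: "(t - mu) * (\<Sum>v\<in>I. 1 / f v t) = (\<Sum>v\<in>I. 1 / g v t)"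
        proof -
          have "(t - mu) * (\<Sum>v\<in>I. 1 / f v t) = (\<Sum>v\<in>I. (t - mu) * (1 / f v t))" by (simp only: sum_distrib_left)
          also have "\<dots> = (\<Sum>v\<in>I. 1 / g v t)" using fI tm by (intro sum.cong) auto
          finally show ?thesis .
        qed
        have sV: "(t - mu) * (1 - (\<Sum>v\<in>V. 1 / f v t)) = H t"
        proof -
          have "(\<Sum>v\<in>V. 1 / f v t) = (\<Sum>v\<in>I. 1 / f v t) + (\<Sum>v\<in>J. 1 / f v t)"
            unfolding VIJ(1) by (simp add: sum.union_disjoint VIJ(2))
          thus ?thesis unfolding H_def using sI by (simp add: algebra_simps)
        qed
        have "poly (charpoly A) t * (t - lam)^k * (t - mu) = (t - lam)^(n+1) * ((t-mu)^(card I) * (\<Prod>v\<in>I. g v t) * (\<Prod>v\<in>J. f v t)) * H t"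
          using common[OF elim] pV sV[symmetric] by (simp add: ac_simps)
        thus ?case unfolding G_def using tl by (simp add: field_simps)
      qed
      define G0 where "G0 = (mu-lam)^(n+1)/(mu-lam)^k * (\<Prod>v\<in>I. g v mu) * (\<Prod>v\<in>J. f v mu) * ((mu - mu) * (1 - (\<Sum>v\<in>J. 1/f v mu)) - (\<Sum>v\<in>I. 1/g v mu))"
      have Glim: "(G \<longlongrightarrow> G0) (at mu)"
        unfolding G_def[abs_def] G0_def H_def f_def g_def
      proof (intro tendsto_intros)
        show "(mu - lam)^k \<noteq> 0" using ml by simp
        show "v \<in> J \<Longrightarrow> (mu - b v) * (mu - lam) - c v \<noteq> 0" for v using VIJ unfolding J_def I_def f_def by auto
        show "v \<in> I \<Longrightarrow> mu + mu - b v - lam \<noteq> 0" for v using gI0[of v] unfolding g_def by simp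
      qed
      have G0nz: "G0 \<noteq> 0"
      proof -
        have "(\<Prod>v\<in>I. g v mu) \<noteq> 0" using gI0 by (simp add: prod_zero_iff)
        moreover have "(\<Prod>v\<in>J. f v mu) \<noteq> 0" unfolding J_def I_def by (simp add: prod_zero_iff)
        moreover have "(mu - lam) * (\<Sum>v\<in>I. 1/g v mu) > 0"
        proof -
          have "(mu - lam) * (\<Sum>v\<in>I. 1/g v mu) = (\<Sum>v\<in>I. (mu - lam)^2 / ((mu - lam)^2 + c v))"
            unfolding sum_distrib_left
          proof (rule sum.cong[OF refl])
            fix v assume v: "v \<in> I"
            have "(mu - lam) * (1 / g v mu) = (mu - lam)^2 / ((mu - lam) * g v mu)"
              using ml gI0[OF v] by (simp add: field_simps power2_eq_square)
            thus "(mu - lam) * (1 / g v mu) = (mu - lam)^2 / ((mu - lam)^2 + c v)" using gI[OF v] by simp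
          qed
          also have "\<dots> > 0"
          proof (rule sum_pos)
            show "finite I" "I \<noteq> {}" using False by auto
            fix v assume v: "v \<in> I"
            have "c v > 0" using cpos v VIJ by auto
            moreover have "(mu - lam)^2 > 0" using ml by simp
            ultimately have "(mu - lam)^2 + c v > 0" "(mu - lam)^2 > 0" by linarith+
            thus "(mu - lam)^2 / ((mu - lam)^2 + c v) > 0" by (intro divide_pos_pos)
          qed
          finally show ?thesis .
        qed
        hence "(\<Sum>v\<in>I. 1/g v mu) \<noteq> 0" by auto
        ultimately show ?thesis unfolding G0_def using ml by simp
      qed
      have "card I \<ge> 1" using False by (simp add: Suc_le_eq card_gt_0_iff)
      hence "card I - 1 = k - 1" using ordF[OF ev Glim G0nz] by simp
      thus False using cI \<open>card I \<ge> 1\<close> by simp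
    next
      case True
      hence JV: "J = V" unfolding J_def by simp
      have fnz: "v \<in> V \<Longrightarrow> f v mu \<noteq> 0" for v using True unfolding I_def by auto
      define S0 where "S0 = 1 - (\<Sum>v\<in>V. 1 / f v mu)"
      define P where "P t = (t-lam)^(n+1)/(t-lam)^k * (\<Prod>v\<in>V. f v t)" for t
      define P0 where "P0 = (mu-lam)^(n+1)/(mu-lam)^k * (\<Prod>v\<in>V. f v mu)"
      have Plim: "(P \<longlongrightarrow> P0) (at mu)" unfolding P_def[abs_def] P0_def f_def
        by (intro tendsto_intros) (use ml in simp)
      have P0nz: "P0 \<noteq> 0" unfolding P0_def using ml fnz by (simp add: prod_zero_iff)
      have PF: "good t \<Longrightarrow> poly (charpoly A) t = P t * (1 - (\<Sum>v\<in>V. 1 / f v t))" for t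
      proof -
        assume g: "good t"
        hence tl: "t - lam \<noteq> 0" using gt by auto
        show ?thesis using common[OF g] tl unfolding P_def by (simp add: field_simps)
      qed
      show False
      proof (cases "S0 = 0")
        case False
        have ev: "eventually (\<lambda>t. poly (charpoly A) t * (t-mu)^0 = (t-mu)^0 * (P t * (1 - (\<Sum>v\<in>V. 1 / f v t)))) (at mu)"
          using evG by eventually_elim (simp add: PF)
        have "((\<lambda>t. P t * (1 - (\<Sum>v\<in>V. 1 / f v t))) \<longlongrightarrow> P0 * S0) (at mu)"
          unfolding S0_def f_def
        proof (intro tendsto_intros Plim)
          show "v \<in> V \<Longrightarrow> (mu - b v) * (mu - lam) - c v \<noteq> 0" for v using fnz unfolding f_def by simp
        qed
        hence "0 - 0 = k - 1" using ordF[OF ev] P0nz False by simp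
        thus False using k3 unfolding k_def by simp
      next
        case S00: True
        define H1 where "H1 t = (\<Sum>v\<in>V. g v t / (f v t * f v mu))" for t
        have HF: "good t \<Longrightarrow> 1 - (\<Sum>v\<in>V. 1 / f v t) = (t - mu) * H1 t" for t
        proof -
          assume g: "good t"
          have "(\<Sum>v\<in>V. 1 / f v mu) - (\<Sum>v\<in>V. 1 / f v t) = (t - mu) * H1 t"
            unfolding H1_def sum_subtractf[symmetric] sum_distrib_left
          proof (rule sum.cong[OF refl])
            fix v assume v: "v \<in> V"
            have "f v t \<noteq> 0" using gf[OF g v] .
            thus "1 / f v mu - 1 / f v t = (t - mu) * (g v t / (f v t * f v mu))"
              using fnz[OF v] fg[of v t] by (simp add: field_simps)
          qed
          thus ?thesis using S00 unfolding S0_def by simp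
        qed
        have ev: "eventually (\<lambda>t. poly (charpoly A) t * (t-mu)^0 = (t-mu)^1 * (P t * H1 t)) (at mu)"
          using evG proof eventually_elim
          case (elim t) thus ?case using PF[OF elim] HF[OF elim] by simp
        qed
        have "(H1 \<longlongrightarrow> H1 mu) (at mu)" unfolding H1_def[abs_def] f_def g_def
          by (intro tendsto_intros) (use fnz in \<open>auto simp: f_def\<close>)
        moreover have "H1 mu \<noteq> 0"
        proof -
          have "(mu - lam) * H1 mu = (\<Sum>v\<in>V. 1 / f v mu) + (\<Sum>v\<in>V. ((mu - lam)^2 + c v) / (f v mu * f v mu))"
            unfolding H1_def sum_distrib_left sum.distrib[symmetric]
          proof (rule sum.cong[OF refl])
            fix v assume v: "v \<in> V"
            show "(mu - lam) * (g v mu / (f v mu * f v mu)) = 1 / f v mu + ((mu - lam)^2 + c v) / (f v mu * f v mu)"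
              using gen[of v] fnz[OF v] by (simp add: field_simps)
          qed
          also have "\<dots> > 0"
          proof -
            have "(\<Sum>v\<in>V. 1 / f v mu) = 1" using S00 unfolding S0_def by simp
            moreover have "(\<Sum>v\<in>V. ((mu - lam)^2 + c v) / (f v mu * f v mu)) \<ge> 0"
            proof (rule sum_nonneg)
              fix v assume v: "v \<in> V"
              have "(mu - lam)^2 + c v \<ge> 0" using cpos[OF v] by (simp add: add_nonneg_nonneg)
              moreover have "f v mu * f v mu \<ge> 0" by simp
              ultimately show "((mu - lam)^2 + c v) / (f v mu * f v mu) \<ge> 0" by simp
            qed
            ultimately show ?thesis by simp
          qed
          finally show ?thesis by auto
        qed
        ultimately have "1 - 0 = k - 1" using ordF[OF ev tendsto_mult[OF Plim]] P0nz by simp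
        thus False using k3 unfolding k_def by simp
      qed
    qed
  qed
qed

end

lemma neg_part:
  assumes c2: "\<And>v. v \<in> V \<Longrightarrow> card (ch v) \<ge> 2" and k3: "card V \<ge> 3"
    and uw: "u \<in> V" "w \<in> V" "card (ch u) \<noteq> card (ch w)"
    and AS: "A \<in> S_T E" and A01: "\<And>i j. i \<noteq> j \<Longrightarrow> A$i$j \<in> {0,1}"
    and ml: "mult_list A = {# card L + 1 - card V, card V - 1, card V - 1, 1, 1 #}"
  shows False
proof -
  define cp where "cp = charpoly A"
  define Rt where "Rt = {x. poly cp x = 0}"
  define M where "M = card L + 1 - card V"
  define k where "k = card V"
  have mlR: "mult_list A = image_mset (\<lambda>x. order x cp) (mset_set Rt)"
    unfolding mult_list_def cp_def Rt_def ..
  have finR: "finite Rt"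
  proof (rule ccontr)
    assume "\<not> finite Rt"
    hence "mult_list A = {#}" unfolding mlR by simp
    thus False using ml by simp
  qed
  have Lk: "card L \<ge> 2 * k"
  proof -
    have "(\<Sum>v\<in>V. 2) \<le> (\<Sum>v\<in>V. card (ch v))" using c2 by (intro sum_mono) auto
    thus ?thesis unfolding card_L_sum k_def by simp
  qed
  have Mne: "M \<noteq> k - 1" "k - 1 \<noteq> 1" using Lk k3 unfolding M_def k_def by auto
  have "M \<in># mult_list A" using ml unfolding M_def by simp
  then obtain lam where lam: "lam \<in> Rt" "order lam cp = M" unfolding mlR using finR by auto
  have "count (mult_list A) (k - 1) = 2" using ml Mne unfolding M_def k_def by simp
  hence "card {x\<in>Rt. order x cp = k - 1} = 2" unfolding mlR count_image_mset_eq_card_vimage[OF finR] .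
  then obtain mu nu where mn: "mu \<noteq> nu" "order mu cp = k - 1" "order nu cp = k - 1"
    by (auto simp: card_2_iff)
  have ls: "(\<forall>l\<in>L. A$l$l = lam) \<and> A$r$r = lam"
    using lam_struct[OF AS A01 _ c2] lam unfolding cp_def M_def by simp
  have mul: "mu \<noteq> lam" "nu \<noteq> lam" using mn lam Mne by auto
  have smu: "\<forall>v\<in>V. (mu - A$v$v) * (mu - lam) = card (ch v)"
    using mu_struct[OF AS A01 _ _ mul(1) _ k3 c2] ls mn unfolding cp_def k_def by simp
  have snu: "\<forall>v\<in>V. (nu - A$v$v) * (nu - lam) = card (ch v)"
    using mu_struct[OF AS A01 _ _ mul(2) _ k3 c2] ls mn unfolding cp_def k_def by simp
  have cv: "v \<in> V \<Longrightarrow> real (card (ch v)) = (lam - nu) * (mu - lam)" for v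
  proof -
    assume v: "v \<in> V"
    define bb where "bb = A$v$v"
    have e1: "(mu - bb) * (mu - lam) = card (ch v)" and e2: "(nu - bb) * (nu - lam) = card (ch v)"
      using smu snu v unfolding bb_def by auto
    have "(mu - nu) * (mu + nu - bb - lam) = 0" using e1 e2 by (simp add: algebra_simps)
    hence b: "bb = mu + nu - lam" using mn(1) by simp
    have "(mu - (mu + nu - lam)) * (mu - lam) = card (ch v)" using e1 unfolding b .
    thus ?thesis by (simp add: algebra_simps)
  qed
  have "real (card (ch u)) = real (card (ch w))" using cv uw by simp
  thus False using uw by simp
qed

end

lemma image_mset_int_inj: "image_mset int X = image_mset int Y \<Longrightarrow> X = Y"
proof -
  assume "image_mset int X = image_mset int Y"
  hence "image_mset nat (image_mset int X) = image_mset nat (image_mset int Y)" by simp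
  thus ?thesis by (simp add: multiset.map_comp comp_def)
qed

theorem mainTheorem19:
  fixes E :: "'n::finite \<Rightarrow> 'n \<Rightarrow> bool" and r :: 'n
  assumes "lush E r"
    and "hedge_height E r = 2"
    and "\<exists>u v. vheight E r u = 1 \<and> vheight E r v = 1 \<and>
               card (children E r u) \<noteq> card (children E r v)"
  shows "(\<exists>A \<in> S_T E. image_mset int (mult_list A) =
            {# ell E r 1 + ell E r 3, ell E r 2, ell E r 2, 1, 1 #})
       \<and> \<not> (\<exists>A \<in> S_T E. (\<forall>i j. i \<noteq> j \<longrightarrow> A $ i $ j \<in> {0, 1}) \<and>
            image_mset int (mult_list A) =
            {# ell E r 1 + ell E r 3, ell E r 2, ell E r 2, 1, 1 #})"
proof -
  interpret H: lushH E r using assms(1,2) by unfold_locales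
  define V where "V = {v. tdist E r v = 1}"
  have d2: "tdist E r l = 2 \<longleftrightarrow> l \<notin> V \<and> l \<noteq> r" for l
    unfolding V_def using H.dep_cases[of l] H.dep0[of l] by auto
  interpret T: tree2 E r V H.par
  proof
    show "r \<notin> V" unfolding V_def by simp
    show "l \<notin> V \<Longrightarrow> l \<noteq> r \<Longrightarrow> H.par l \<in> V" for l
      using d2[of l] H.par_V[of l] unfolding V_def by simp
    show "i \<noteq> j \<Longrightarrow> E i j \<longleftrightarrow> (i = r \<and> j \<in> V) \<or> (j = r \<and> i \<in> V)
        \<or> (i \<notin> V \<and> i \<noteq> r \<and> j = H.par i) \<or> (j \<notin> V \<and> j \<noteq> r \<and> i = H.par j)" for i j
      using H.Eiff[of i j] d2[of i] d2[of j] unfolding V_def by auto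
  qed
  have Ldef: "T.L = {v. tdist E r v = 2}" unfolding T.L_def using d2 by auto
  have chdef: "T.ch v = {l. tdist E r l = 2 \<and> H.par l = v}" for v
    unfolding T.ch_def Ldef by auto
  have c2: "\<And>v. v \<in> V \<Longrightarrow> card (T.ch v) \<ge> 2"
  proof -
    fix v assume v: "v \<in> V"
    have "card (T.ch v) = card {l. tdist E r l = 2 \<and> H.par l = v}" by (simp only: chdef)
    thus "card (T.ch v) \<ge> 2" using H.cardch[of v] v unfolding V_def by simp
  qed
  have k3: "card V \<ge> 3" unfolding V_def using H.cardV .
  have Lk: "card T.L \<ge> 2 * card V"
  proof -
    have "(\<Sum>v\<in>V. 2) \<le> (\<Sum>v\<in>V. card (T.ch v))" using c2 by (intro sum_mono) auto
    thus ?thesis unfolding T.card_L_sum by simp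
  qed
  define M where "M = card T.L + 1 - card V"
  have ell13: "ell E r 1 + ell E r 3 = int M"
    unfolding M_def H.ell1 H.ell3 Ldef[symmetric] V_def[symmetric] using Lk by simp
  have ell2: "ell E r 2 = int (card V - 1)" unfolding H.ell2 V_def[symmetric] using k3 by simp
  have tgt: "{# ell E r 1 + ell E r 3, ell E r 2, ell E r 2, 1, 1 #} = image_mset int {# M, card V - 1, card V - 1, 1, 1 #}"
    unfolding ell13 ell2 by simp
  have pos: "\<exists>A \<in> S_T E. image_mset int (mult_list A) = {# ell E r 1 + ell E r 3, ell E r 2, ell E r 2, 1, 1 #}"
  proof (intro bexI[of _ T.A0])
    show "T.A0 \<in> S_T E" by (rule T.A0_ST)
    have "T.ch v \<noteq> {}" if "v \<in> V" for v using c2[OF that] by auto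
    hence "mult_list T.A0 = {# M, card V - 1, card V - 1, 1, 1 #}"
      unfolding M_def using T.pos_mult k3 Lk by simp
    thus "image_mset int (mult_list T.A0) = {# ell E r 1 + ell E r 3, ell E r 2, ell E r 2, 1, 1 #}"
      unfolding tgt by simp
  qed
  obtain u w where uw: "vheight E r u = 1" "vheight E r w = 1" "card (children E r u) \<noteq> card (children E r w)"
    using assms(3) by blast
  have du: "u \<in> V" "w \<in> V" using uw(1,2) H.vh_eq[of u] H.vh_eq[of w] H.dep_le2[of u] H.dep_le2[of w]
    unfolding V_def by auto
  have cuw: "card (T.ch u) \<noteq> card (T.ch w)"
  proof -
    have d1: "tdist E r u = 1" "tdist E r w = 1" using du unfolding V_def by auto
    have "card (T.ch u) = card (children E r u)" "card (T.ch w) = card (children E r w)"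
      by (simp_all only: chdef H.children_V[OF d1(1)] H.children_V[OF d1(2)])
    thus ?thesis using uw(3) by simp
  qed
  have neg: "\<not> (\<exists>A \<in> S_T E. (\<forall>i j. i \<noteq> j \<longrightarrow> A $ i $ j \<in> {0, 1}) \<and>
            image_mset int (mult_list A) = {# ell E r 1 + ell E r 3, ell E r 2, ell E r 2, 1, 1 #})"
  proof
    assume "\<exists>A \<in> S_T E. (\<forall>i j. i \<noteq> j \<longrightarrow> A $ i $ j \<in> {0, 1}) \<and>
            image_mset int (mult_list A) = {# ell E r 1 + ell E r 3, ell E r 2, ell E r 2, 1, 1 #}"
    then obtain A where A: "A \<in> S_T E" "\<And>i j. i \<noteq> j \<Longrightarrow> A $ i $ j \<in> {0, 1}"
      "image_mset int (mult_list A) = image_mset int {# M, card V - 1, card V - 1, 1, 1 #}"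
      unfolding tgt by blast
    have "mult_list A = {# M, card V - 1, card V - 1, 1, 1 #}" using image_mset_int_inj[OF A(3)] .
    thus False using T.neg_part[OF c2 k3 du cuw A(1) A(2)] unfolding M_def by blast
  qed
  show ?thesis using pos neg by blast
qed


end
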